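(* Setting $f_k:=R(u_k)(-u_k)^nf$ (so that $(dd^cu_{k+1})^n=f_k\,dV$), one has for every $k\in\mathbb N$ $$\|f_k\|_{L^{1+1/n}(\Omega)}\le\|f\|_{L^\infty(\Omega)}^{1/(n+1)}\,R(u_0)\,\|u_0\|^n_{L^{n+1}(\Omega,\mu)},$$ where $L^{1+1/n}(\Omega)$ is taken with respect to $dV$.
   Context: $\Omega\Subset\mathbb C^n$ bounded strictly pseudoconvex, $0<f\in C^\infty(\bar\Omega)$, $dV$ Euclidean volume form, $\mu=f\,dV$, $dd^c=i\partial\bar\partial$, $(dd^c u)^n$ the complex Monge–Ampère measure. For bounded negative plurisubharmonic $\phi\not\equiv0$ with $\int_\Omega(dd^c\phi)^n<\infty$: $R(\phi)=\int_\Omega(-\phi)(dd^c\phi)^n\big/\int_\Omega(-\phi)^{n+1}d\mu$. The sequence $(u_k)$: $u_0\in PSH(\Omega)\cap C^{0,1}(\bar\Omega)$ with $(dd^cu_0)^n\ge f\,dV$, $u_0\le0$ on $\partial\Omega$, $\int_\Omega(dd^cu_0)^n<\infty$; $u_{k+1}\in PSH(\Omega)\cap C^0(\bar\Omega)$ is the unique solution of $(dd^cu_{k+1})^n=R(u_k)(-u_k)^nf\,dV$ on $\Omega$, $u_{k+1}=0$ on $\partial\Omega$. *)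

theory Defs
  imports "HOL-Analysis.Analysis"
begin

type_synonym 'n cvec = "complex ^ 'n"

definition dirderiv :: "('n::finite cvec \<Rightarrow> real) \<Rightarrow> 'n cvec \<Rightarrow> 'n cvec \<Rightarrow> real" where
  "dirderiv g v z = deriv (\<lambda>t::real. g (z + t *\<^sub>R v)) 0"

text \<open>The 2n real coordinate directions: x_j = axis j 1, y_j = axis j i.\<close>
definition coord_dirs :: "'n::finite cvec set" where
  "coord_dirs = {axis j 1 | j. True} \<union> {axis j \<i> | j. True}"

fun iter_deriv :: "'n::finite cvec list \<Rightarrow> ('n cvec \<Rightarrow> real) \<Rightarrow> ('n cvec \<Rightarrow> real)" where
  "iter_deriv [] g = g"
| "iter_deriv (v # vs) g = dirderiv (iter_deriv vs g) v"

definition Ck_on :: "nat \<Rightarrow> 'n::finite cvec set \<Rightarrow> ('n cvec \<Rightarrow> real) \<Rightarrow> bool" where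
  "Ck_on k U g \<longleftrightarrow> open U \<and>
     (\<forall>vs. set vs \<subseteq> coord_dirs \<and> length vs \<le> k \<longrightarrow>
        continuous_on U (iter_deriv vs g) \<and>
        (\<forall>v\<in>coord_dirs. length vs < k \<longrightarrow>
           (\<forall>z\<in>U. (\<lambda>t::real. iter_deriv vs g (z + t *\<^sub>R v)) differentiable (at 0))))"

definition smooth_on :: "'n::finite cvec set \<Rightarrow> ('n cvec \<Rightarrow> real) \<Rightarrow> bool" where
  "smooth_on U g \<longleftrightarrow> (\<forall>k. Ck_on k U g)"

definition smooth_on_closure :: "'n::finite cvec set \<Rightarrow> ('n cvec \<Rightarrow> real) \<Rightarrow> bool" where
  "smooth_on_closure \<Omega> g \<longleftrightarrow>
     (\<exists>U h. open U \<and> closure \<Omega> \<subseteq> U \<and> smooth_on U h \<and> (\<forall>z\<in>closure \<Omega>. h z = g z))"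

definition complex_hessian :: "('n::finite cvec \<Rightarrow> real) \<Rightarrow> 'n cvec \<Rightarrow> complex ^ 'n ^ 'n" where
  "complex_hessian g z = (\<chi> j k.
     (complex_of_real (dirderiv (dirderiv g (axis k 1)) (axis j 1) z
                     + dirderiv (dirderiv g (axis k \<i>)) (axis j \<i>) z)
      + \<i> * complex_of_real (dirderiv (dirderiv g (axis k \<i>)) (axis j 1) z
                     - dirderiv (dirderiv g (axis k 1)) (axis j \<i>) z)) / 4)"

text \<open>For C^2 g, (dd^c g)^n = (i \<partial>\<bar>\<partial> g)^n = n! 2^n det(g_{j\bar k}) dV, since i dz\<and>d\<bar>z = 2 dx\<and>dy.\<close>
definition MA_density :: "('n::finite cvec \<Rightarrow> real) \<Rightarrow> 'n cvec \<Rightarrow> real" where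
  "MA_density g z = fact CARD('n) * 2 ^ CARD('n) * Re (det (complex_hessian g z))"

definition usc_on :: "'n::finite cvec set \<Rightarrow> ('n cvec \<Rightarrow> real) \<Rightarrow> bool" where
  "usc_on \<Omega> g \<longleftrightarrow> (\<forall>x\<in>\<Omega>. \<forall>c. g x < c \<longrightarrow> (\<forall>\<^sub>F y in at x within \<Omega>. g y < c))"

text \<open>Real-valued plurisubharmonic functions: upper semicontinuous and subharmonic on every
  complex line, expressed by the sub-mean value inequality on every closed disc in \<Omega>.\<close>
definition psh_on :: "'n::finite cvec set \<Rightarrow> ('n cvec \<Rightarrow> real) \<Rightarrow> bool" where
  "psh_on \<Omega> g \<longleftrightarrow> open \<Omega> \<and> usc_on \<Omega> g \<and>
     (\<forall>a b. (\<forall>\<zeta>. cmod \<zeta> \<le> 1 \<longrightarrow> a + \<zeta> *s b \<in> \<Omega>) \<longrightarrow>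
        set_integrable lborel {0..2*pi} (\<lambda>\<theta>. g (a + cis \<theta> *s b)) \<and>
        g a \<le> (1 / (2*pi)) * (LINT \<theta>:{0..2*pi}|lborel. g (a + cis \<theta> *s b)))"

definition strictly_psh_C2_on :: "'n::finite cvec set \<Rightarrow> ('n cvec \<Rightarrow> real) \<Rightarrow> bool" where
  "strictly_psh_C2_on U g \<longleftrightarrow> Ck_on 2 U g \<and>
     (\<forall>z\<in>U. \<forall>w::'n cvec. w \<noteq> 0 \<longrightarrow>
        0 < Re (\<Sum>j\<in>UNIV. \<Sum>k\<in>UNIV. complex_hessian g z $ j $ k * w $ j * cnj (w $ k)))"

definition strictly_pseudoconvex :: "'n::finite cvec set \<Rightarrow> bool" where
  "strictly_pseudoconvex \<Omega> \<longleftrightarrow> bounded \<Omega> \<and> open \<Omega> \<and> \<Omega> \<noteq> {} \<and>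
     (\<exists>U \<rho>. open U \<and> closure \<Omega> \<subseteq> U \<and> smooth_on U \<rho> \<and> strictly_psh_C2_on U \<rho> \<and>
        \<Omega> = {z\<in>U. \<rho> z < 0} \<and>
        (\<forall>z\<in>frontier \<Omega>. \<exists>v\<in>coord_dirs. dirderiv \<rho> v z \<noteq> 0))"

definition is_MA :: "'n::finite cvec set \<Rightarrow> ('n cvec \<Rightarrow> real) \<Rightarrow> 'n cvec measure \<Rightarrow> bool" where
  "is_MA \<Omega> u \<nu> \<longleftrightarrow> sets \<nu> = sets borel \<and> emeasure \<nu> (UNIV - \<Omega>) = 0 \<and>
     (\<forall>K. compact K \<and> K \<subseteq> \<Omega> \<longrightarrow> emeasure \<nu> K < \<infinity>) \<and>
     (\<forall>V w. open V \<and> compact (closure V) \<and> closure V \<subseteq> \<Omega> \<and>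
        (\<forall>j. Ck_on 2 V (w j) \<and> psh_on V (w j)) \<and>
        uniform_limit V w u sequentially \<longrightarrow>
        (\<forall>h. continuous_on UNIV h \<and> compact (closure {z. h z \<noteq> 0}) \<and>
            closure {z. h z \<noteq> 0} \<subseteq> V \<longrightarrow>
            (\<lambda>j. integral\<^sup>L lborel (\<lambda>z. h z * MA_density (w j) z))
              \<longlonglongrightarrow> integral\<^sup>L \<nu> h))"

definition MA :: "'n::finite cvec set \<Rightarrow> ('n cvec \<Rightarrow> real) \<Rightarrow> 'n cvec measure" where
  "MA \<Omega> u = (THE \<nu>. is_MA \<Omega> u \<nu>)"

definition Rq :: "'n::finite cvec set \<Rightarrow> ('n cvec \<Rightarrow> real) \<Rightarrow> ('n cvec \<Rightarrow> real) \<Rightarrow> real" where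
  "Rq \<Omega> f \<phi> = (LINT z:\<Omega>|MA \<Omega> \<phi>. - \<phi> z)
               / (LINT z:\<Omega>|lborel. (- \<phi> z) ^ (CARD('n) + 1) * f z)"

end

theory Submission
  imports Defs "HOL-Real_Asymp.Real_Asymp"
begin


definition pp :: "nat \<Rightarrow> real \<Rightarrow> real" where "pp k s = (max 0 s) ^ k"

lemma pp_deriv:
  assumes "k \<ge> 1"
  shows "(pp (Suc k) has_real_derivative (real (Suc k) * pp k s)) (at s)"
proof -
  consider "s > 0" | "s < 0" | "s = 0" by linarith
  then show ?thesis
  proof cases
    case 1
    have "((\<lambda>x. x ^ Suc k) has_real_derivative (real (Suc k) * s ^ k)) (at s)"
      by (rule derivative_eq_intros refl | simp)+
    then have "((\<lambda>x. x ^ Suc k) has_real_derivative (real (Suc k) * pp k s)) (at s)"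
      using 1 by (simp add: pp_def)
    then show ?thesis
      apply (rule has_field_derivative_transform_within_open[where S="{0<..}"])
      using 1 by (auto simp: pp_def)
  next
    case 2
    have "((\<lambda>x. 0) has_real_derivative (real (Suc k) * pp k s)) (at s)"
      using 2 assms by (simp add: pp_def max_def power_0_left)
    then show ?thesis
      apply (rule has_field_derivative_transform_within_open[where S="{..<0}"])
      using 2 assms by (auto simp: pp_def)
  next
    case 3
    have "(\<lambda>h. (pp (Suc k) (0 + h) - pp (Suc k) 0) / h) \<midarrow>0\<rightarrow> 0"
    proof (rule Lim_null_comparison)
      show "\<forall>\<^sub>F h in at 0. norm ((pp (Suc k) (0 + h) - pp (Suc k) 0) / h) \<le> \<bar>h\<bar> ^ k"
      proof (rule always_eventually, intro allI)
        fix h :: real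
        show "norm ((pp (Suc k) (0 + h) - pp (Suc k) 0) / h) \<le> \<bar>h\<bar> ^ k"
        proof (cases "h > 0")
          case True
          then show ?thesis by (simp add: pp_def max_def)
        next
          case False
          then show ?thesis by (simp add: pp_def max_def)
        qed
      qed
      show "((\<lambda>h. \<bar>h\<bar> ^ k) \<longlongrightarrow> 0) (at (0::real))"
        using assms by (auto intro!: tendsto_eq_intros simp: power_0_left)
    qed
    then show ?thesis using 3 assms by (simp add: DERIV_def pp_def power_0_left)
  qed
qed


lemma pp_cont: "continuous_on UNIV (pp k)"
  unfolding pp_def by (intro continuous_intros)

definition bump :: "real \<Rightarrow> 'a::real_inner \<Rightarrow> real" where
  "bump e y = pp 3 (e\<^sup>2 - (norm y)\<^sup>2)"
definition bumpD1 :: "real \<Rightarrow> 'a::real_inner \<Rightarrow> 'a \<Rightarrow> real" where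
  "bumpD1 e v y = 3 * pp 2 (e\<^sup>2 - (norm y)\<^sup>2) * (-2 * (y \<bullet> v))"
definition bumpD2 :: "real \<Rightarrow> 'a::real_inner \<Rightarrow> 'a \<Rightarrow> 'a \<Rightarrow> real" where
  "bumpD2 e v1 v2 y = 3 * (2 * pp 1 (e\<^sup>2 - (norm y)\<^sup>2) * (-2 * (y \<bullet> v1)) * (-2 * (y \<bullet> v2))
      + pp 2 (e\<^sup>2 - (norm y)\<^sup>2) * (-2 * (v1 \<bullet> v2)))"

lemma norm_line_sq: "(norm (y + s *\<^sub>R v))\<^sup>2 = (norm y)\<^sup>2 + 2 * s * (y \<bullet> v) + s\<^sup>2 * (norm v)\<^sup>2"
  for y v :: "'a::real_inner"
  by (simp only: power2_norm_eq_inner) (simp add: inner_add_left inner_add_right inner_commute algebra_simps power2_eq_square)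

lemma arg_deriv: "((\<lambda>s. e\<^sup>2 - (norm (y + s *\<^sub>R v))\<^sup>2) has_real_derivative (-2 * (y \<bullet> v))) (at 0)"
  for y v :: "'a::real_inner"
proof -
  have "((\<lambda>s. e\<^sup>2 - ((norm y)\<^sup>2 + 2 * s * (y \<bullet> v) + s\<^sup>2 * (norm v)\<^sup>2)) has_real_derivative (-2 * (y \<bullet> v))) (at 0)"
    by (rule derivative_eq_intros refl | simp)+
  then show ?thesis by (simp add: norm_line_sq)
qed

lemma bump_deriv: "((\<lambda>s. bump e (y + s *\<^sub>R v)) has_real_derivative bumpD1 e v y) (at 0)"
proof -
  have "((\<lambda>s. pp 3 (e\<^sup>2 - (norm (y + s *\<^sub>R v))\<^sup>2)) has_real_derivative
     (real (Suc 2) * pp 2 (e\<^sup>2 - (norm (y + 0 *\<^sub>R v))\<^sup>2)) * (-2 * (y \<bullet> v))) (at 0)"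
    using DERIV_chain2[OF pp_deriv[of 2] arg_deriv] by (simp add: numeral_3_eq_3)
  then show ?thesis by (simp add: bump_def bumpD1_def)
qed

lemma bumpD1_deriv: "((\<lambda>s. bumpD1 e v2 (y + s *\<^sub>R v1)) has_real_derivative bumpD2 e v1 v2 y) (at 0)"
proof -
  have d1: "((\<lambda>s. pp 2 (e\<^sup>2 - (norm (y + s *\<^sub>R v1))\<^sup>2)) has_real_derivative
     (real (Suc 1) * pp 1 (e\<^sup>2 - (norm (y + 0 *\<^sub>R v1))\<^sup>2)) * (-2 * (y \<bullet> v1))) (at 0)"
    using DERIV_chain2[OF pp_deriv[of 1] arg_deriv] by (simp add: numeral_2_eq_2)
  have d2: "((\<lambda>s. -2 * ((y + s *\<^sub>R v1) \<bullet> v2)) has_real_derivative (-2 * (v1 \<bullet> v2))) (at 0)"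
  proof -
    have "((\<lambda>s. -2 * (y \<bullet> v2 + s * (v1 \<bullet> v2))) has_real_derivative (-2 * (v1 \<bullet> v2))) (at 0)"
      by (rule derivative_eq_intros refl | simp)+
    then show ?thesis by (simp add: inner_add_left)
  qed
  have "((\<lambda>s. 3 * (pp 2 (e\<^sup>2 - (norm (y + s *\<^sub>R v1))\<^sup>2) * (-2 * ((y + s *\<^sub>R v1) \<bullet> v2)))) has_real_derivative
     3 * ((real (Suc 1) * pp 1 (e\<^sup>2 - (norm (y + 0 *\<^sub>R v1))\<^sup>2)) * (-2 * (y \<bullet> v1)) * (-2 * ((y + 0 *\<^sub>R v1) \<bullet> v2))
      + (-2 * (v1 \<bullet> v2)) * pp 2 (e\<^sup>2 - (norm (y + 0 *\<^sub>R v1))\<^sup>2))) (at 0)"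
    by (intro DERIV_cmult DERIV_mult d1 d2)
  then show ?thesis by (simp add: bumpD1_def bumpD2_def algebra_simps)
qed

lemma bump_cont: "continuous_on UNIV (bump e)"
  and bumpD1_cont: "continuous_on UNIV (bumpD1 e v)"
  and bumpD2_cont: "continuous_on UNIV (bumpD2 e v1 v2)"
  unfolding bump_def bumpD1_def bumpD2_def
  by (intro continuous_intros continuous_on_compose2[OF pp_cont]; simp)+

lemma bump_nonneg: "bump e y \<ge> 0"
  by (simp add: bump_def pp_def)

lemma bump_zero: "norm y \<ge> e \<Longrightarrow> e \<ge> 0 \<Longrightarrow> bump e y = 0"
  by (simp add: bump_def pp_def max_def power_mono)



definition conv :: "('a::euclidean_space \<Rightarrow> real) \<Rightarrow> 'a set \<Rightarrow> ('a \<Rightarrow> real) \<Rightarrow> 'a \<Rightarrow> real" where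
  "conv U C \<psi> z = integral C (\<lambda>x. U x * \<psi> (z - x))"

lemma conv_cont:
  assumes "continuous_on UNIV U" "continuous_on UNIV \<psi>"
  shows "continuous_on UNIV (conv U (cbox a b) \<psi>)"
  unfolding conv_def
  by (rule integral_continuous_on_param)
    (auto simp: split_beta intro!: continuous_intros continuous_on_compose2[OF assms(2)]
      continuous_on_compose2[OF assms(1)])

lemma conv_deriv:
  assumes U: "continuous_on UNIV U" and c': "continuous_on UNIV \<psi>'" and cpsi: "continuous_on UNIV \<psi>"
    and d: "\<And>y. ((\<lambda>s. \<psi> (y + s *\<^sub>R v)) has_real_derivative \<psi>' y) (at 0)"
  shows "((\<lambda>t. conv U (cbox a b) \<psi> (z + t *\<^sub>R v)) has_real_derivative conv U (cbox a b) \<psi>' (z + t0 *\<^sub>R v)) (at t0)"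
proof -
  have fx: "((\<lambda>t. U x * \<psi> (z + t *\<^sub>R v - x)) has_field_derivative U x * \<psi>' (z + t *\<^sub>R v - x)) (at t within UNIV)" for t x
  proof -
    let ?y = "z + t *\<^sub>R v - x"
    have "((\<lambda>s. \<psi> (?y + s *\<^sub>R v)) has_real_derivative \<psi>' ?y) (at (t + - t))" using d by simp
    then have "((\<lambda>s. \<psi> (?y + (s + - t) *\<^sub>R v)) has_real_derivative \<psi>' ?y) (at t)"
      by (simp only: DERIV_shift)
    moreover have "(\<lambda>s. \<psi> (?y + (s + - t) *\<^sub>R v)) = (\<lambda>s. \<psi> (z + s *\<^sub>R v - x))"
      by (intro ext arg_cong[where f=\<psi>]) (simp add: algebra_simps)
    ultimately have "((\<lambda>s. \<psi> (z + s *\<^sub>R v - x)) has_real_derivative \<psi>' ?y) (at t)"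
      by simp
    then show ?thesis by (intro DERIV_cmult) simp
  qed
  have "((\<lambda>t. integral (cbox a b) (\<lambda>x. U x * \<psi> (z + t *\<^sub>R v - x))) has_field_derivative
      integral (cbox a b) (\<lambda>x. U x * \<psi>' (z + t0 *\<^sub>R v - x))) (at t0 within UNIV)"
  proof (rule leibniz_rule_field_derivative[where fx="\<lambda>t x. U x * \<psi>' (z + t *\<^sub>R v - x)"])
    show "\<And>x t. x \<in> UNIV \<Longrightarrow> t \<in> cbox a b \<Longrightarrow> ((\<lambda>x. U t * \<psi> (z + x *\<^sub>R v - t)) has_field_derivative U t * \<psi>' (z + x *\<^sub>R v - t)) (at x within UNIV)"
      using fx by blast
    show "\<And>x. x \<in> UNIV \<Longrightarrow> (\<lambda>t. U t * \<psi> (z + x *\<^sub>R v - t)) integrable_on cbox a b"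
      by (intro integrable_continuous continuous_intros continuous_on_compose2[OF cpsi]
          continuous_on_compose2[OF U]) auto
    show "continuous_on (UNIV \<times> cbox a b) (\<lambda>(x, t). U t * \<psi>' (z + x *\<^sub>R v - t))"
      by (auto simp: split_beta intro!: continuous_intros continuous_on_compose2[OF c']
          continuous_on_compose2[OF U])
  qed auto
  then show ?thesis by (simp add: conv_def)
qed

lemma conv_dirderiv:
  assumes U: "continuous_on UNIV U" and c': "continuous_on UNIV \<psi>'" and cpsi: "continuous_on UNIV \<psi>"
    and d: "\<And>y. ((\<lambda>s. \<psi> (y + s *\<^sub>R v)) has_real_derivative \<psi>' y) (at 0)"
  shows "dirderiv (conv U (cbox a b) \<psi>) v = conv U (cbox a b) \<psi>'"
  and "(\<lambda>t. conv U (cbox a b) \<psi> (z + t *\<^sub>R v)) differentiable (at 0)"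
proof -
  show "dirderiv (conv U (cbox a b) \<psi>) v = conv U (cbox a b) \<psi>'"
    by (rule ext) (simp add: dirderiv_def DERIV_imp_deriv[OF conv_deriv[OF assms, of a b _ 0, simplified]])
  show "(\<lambda>t. conv U (cbox a b) \<psi> (z + t *\<^sub>R v)) differentiable (at 0)"
    using conv_deriv[OF assms, of a b z 0] 
    by (meson differentiableI has_field_derivative_imp_has_derivative)
qed

lemma conv_Ck2:
  fixes U :: "'n::finite cvec \<Rightarrow> real"
  assumes U: "continuous_on UNIV U" and c0: "continuous_on UNIV \<phi>"
    and c1: "\<And>v. continuous_on UNIV (\<phi>1 v)" and c2: "\<And>v1 v2. continuous_on UNIV (\<phi>2 v1 v2)"
    and d1: "\<And>v y. ((\<lambda>s. \<phi> (y + s *\<^sub>R v)) has_real_derivative \<phi>1 v y) (at 0)"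
    and d2: "\<And>v1 v2 y. ((\<lambda>s. \<phi>1 v2 (y + s *\<^sub>R v1)) has_real_derivative \<phi>2 v1 v2 y) (at 0)"
    and V: "open V"
  shows "Ck_on 2 V (conv U (cbox a b) \<phi>)"
proof -
  let ?g = "conv U (cbox a b) \<phi>"
  have key: "\<exists>\<psi>. continuous_on UNIV \<psi> \<and> iter_deriv vs ?g = conv U (cbox a b) \<psi> \<and>
      (length vs < 2 \<longrightarrow> (\<forall>v. \<exists>\<psi>'. continuous_on UNIV \<psi>' \<and> (\<forall>y. ((\<lambda>s. \<psi> (y + s *\<^sub>R v)) has_real_derivative \<psi>' y) (at 0))))"
    if len: "length vs \<le> 2" for vs
  proof -
    consider "vs = []" | v2 where "vs = [v2]" | v1 v2 where "vs = [v1, v2]"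
      using len by (cases vs; cases "tl vs"; auto)
    then show ?thesis
    proof cases
      case 1
      then show ?thesis using c0 c1 d1 by simp blast
    next
      case 2
      then show ?thesis using c1 c2 d2 conv_dirderiv(1)[OF U c1 c0 d1] by simp blast
    next
      case 3
      then show ?thesis using c2 conv_dirderiv(1)[OF U c1 c0 d1] conv_dirderiv(1)[OF U c2 c1 d2] by auto
    qed
  qed
  show ?thesis
    unfolding Ck_on_def
  proof (intro conjI allI impI ballI V)
    fix vs :: "'n cvec list" assume h: "set vs \<subseteq> coord_dirs \<and> length vs \<le> 2"
    then obtain \<psi> where p: "continuous_on UNIV \<psi>" "iter_deriv vs ?g = conv U (cbox a b) \<psi>"
      "length vs < 2 \<longrightarrow> (\<forall>v. \<exists>\<psi>'. continuous_on UNIV \<psi>' \<and> (\<forall>y. ((\<lambda>s. \<psi> (y + s *\<^sub>R v)) has_real_derivative \<psi>' y) (at 0)))"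
      using key by blast
    show "continuous_on V (iter_deriv vs ?g)"
      using conv_cont[OF U p(1), of a b] p(2) continuous_on_subset by fastforce
    fix v z assume "length vs < 2"
    then obtain \<psi>' where "continuous_on UNIV \<psi>'" "\<And>y. ((\<lambda>s. \<psi> (y + s *\<^sub>R v)) has_real_derivative \<psi>' y) (at 0)"
      using p(3) by blast
    from conv_dirderiv(2)[OF U this(1) p(1) this(2)]
    show "(\<lambda>t. iter_deriv vs ?g (z + t *\<^sub>R v)) differentiable at 0" using p(2) by simp
  qed
qed



lemma conv_shift:
  fixes U \<psi> :: "'a::euclidean_space \<Rightarrow> real"
  assumes U: "continuous_on UNIV U" and cpsi: "continuous_on UNIV \<psi>"
    and supp: "\<And>y. y \<notin> cbox c d \<Longrightarrow> \<psi> y = 0"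
    and sub: "\<And>y. y \<in> cbox c d \<Longrightarrow> z - y \<in> cbox a b"
  shows "conv U (cbox a b) \<psi> z = integral (cbox c d) (\<lambda>y. U (z - y) * \<psi> y)"
proof -
  let ?g1 = "\<lambda>x. U x * \<psi> (z - x)"
  let ?g2 = "\<lambda>y. U (z - y) * \<psi> y"
  have cg1: "continuous_on UNIV ?g1"
    by (intro continuous_intros continuous_on_compose2[OF cpsi] continuous_on_compose2[OF U]) auto
  have cg2: "continuous_on UNIV ?g2"
    by (intro continuous_intros continuous_on_compose2[OF cpsi] continuous_on_compose2[OF U]) auto
  have "(?g1 has_integral conv U (cbox a b) \<psi> z) (cbox a b)"
    unfolding conv_def using cg1 continuous_on_subset integrable_continuous by blast
  from has_integral_affinity[OF this, of "-1" z]
  have "((\<lambda>x. ?g1 ((-1) *\<^sub>R x + z)) has_integral conv U (cbox a b) \<psi> z) ((\<lambda>x. -x + z) ` cbox a b)"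
    by simp
  moreover have "(\<lambda>x. ?g1 ((-1) *\<^sub>R x + z)) = ?g2" by (rule ext) simp
  ultimately have I1: "(?g2 has_integral conv U (cbox a b) \<psi> z) ((\<lambda>x. -x + z) ` cbox a b)" by simp
  have "(?g2 has_integral integral (cbox c d) ?g2) (cbox c d)"
    using cg2 continuous_on_subset integrable_continuous by blast
  moreover have "cbox c d \<subseteq> (\<lambda>x. -x + z) ` cbox a b"
  proof
    fix y assume "y \<in> cbox c d"
    then have "z - y \<in> cbox a b" by (rule sub)
    moreover have "y = - (z - y) + z" by simp
    ultimately show "y \<in> (\<lambda>x. -x + z) ` cbox a b" by blast
  qed
  ultimately have "(?g2 has_integral integral (cbox c d) ?g2) ((\<lambda>x. -x + z) ` cbox a b)"
    using has_integral_on_superset[of ?g2 _ "cbox c d" "(\<lambda>x. -x + z) ` cbox a b"] supp by auto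
  then show ?thesis using I1 has_integral_unique by blast
qed

definition B0 :: "'a::euclidean_space set" where "B0 = cbox (- One) One"

lemma ball_B0: "norm (y::'a::euclidean_space) \<le> 1 \<Longrightarrow> y \<in> B0"
proof -
  have o: "i \<bullet> (\<Sum>Basis::'a) = 1" if "i \<in> Basis" for i
    using inner_sum_Basis[OF that] by (simp add: inner_commute)
  assume "norm y \<le> 1"
  then show ?thesis
  unfolding B0_def mem_box
  using Basis_le_norm[of _ y] o by (force simp: abs_le_iff inner_commute)
qed

lemma box_B0_ne: "box (- One) (One::'a::euclidean_space) \<noteq> {}"
  by (simp add: box_ne_empty)

lemma Nb_pos:
  assumes "0 < e"
  shows "0 < integral (B0::'a::euclidean_space set) (bump e)"
proof -
  have c: "continuous_on (cbox (- One) (One::'a)) (bump e)"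
    using bump_cont continuous_on_subset by blast
  have nn: "0 \<le> integral (B0::'a set) (bump e)"
    unfolding B0_def by (rule integral_nonneg) (use c integrable_continuous bump_nonneg in auto)
  have "(0::'a) \<in> cbox (- One) One" using ball_B0[of 0] by (simp add: B0_def)
  moreover have "bump e (0::'a) \<noteq> 0" using assms by (simp add: bump_def pp_def)
  ultimately have "integral (cbox (- One) (One::'a)) (bump e) \<noteq> 0"
    using integral_cbox_eq_0_iff[OF c box_B0_ne] bump_nonneg by blast
  then show ?thesis using nn by (simp add: B0_def)
qed



lemma cont_circle: "continuous_on UNIV (\<lambda>\<theta>::real. a + cis \<theta> *s (b::'n::finite cvec))"
  unfolding vector_scalar_mult_def by (intro continuous_intros)

lemma psh_smooth:
  fixes ut :: "'n::finite cvec \<Rightarrow> real"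
  assumes psh: "psh_on \<Omega> u" and cut: "continuous_on UNIV ut" and ut: "\<And>z. z \<in> \<Omega> \<Longrightarrow> ut z = u z"
    and V: "open V"
    and cw: "continuous_on UNIV w"
    and rep: "\<And>z. z \<in> V \<Longrightarrow> w z = integral B0 (\<lambda>y. ut (z - y) * \<phi> y)"
    and cphi: "continuous_on UNIV \<phi>" and phinn: "\<And>y. \<phi> y \<ge> 0"
    and supp: "\<And>y z. \<phi> y \<noteq> 0 \<Longrightarrow> z \<in> V \<Longrightarrow> z - y \<in> \<Omega>"
  shows "psh_on V w"
  unfolding psh_on_def
proof (intro conjI allI impI V)
  show "usc_on V w"
    unfolding usc_on_def
  proof (intro ballI allI impI)
    fix x c assume "x \<in> V" "w x < c"
    have "(w \<longlongrightarrow> w x) (at x within V)"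
      using continuous_on_subset[OF cw subset_UNIV, of V] \<open>x \<in> V\<close> unfolding continuous_on_def by blast
    then show "\<forall>\<^sub>F y in at x within V. w y < c" using \<open>w x < c\<close> order_tendstoD(2) by blast
  qed
  fix a b assume H: "\<forall>\<zeta>. cmod \<zeta> \<le> 1 \<longrightarrow> a + \<zeta> *s b \<in> V"
  let ?g = "\<lambda>\<theta>. a + cis \<theta> *s b"
  have cg: "continuous_on UNIV (\<lambda>\<theta>. w (?g \<theta>))"
    by (rule continuous_on_compose2[OF cw cont_circle]) auto
  show si: "set_integrable lborel {0..2*pi} (\<lambda>\<theta>. w (?g \<theta>))"
    unfolding set_integrable_def
    by (rule borel_integrable_compact) (auto intro: continuous_on_subset[OF cg])
  have L: "(LINT \<theta>:{0..2*pi}|lborel. w (?g \<theta>)) = integral {0..2*pi} (\<lambda>\<theta>. w (?g \<theta>))"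
    using set_borel_integral_eq_integral(2)[OF si] .
  have inV: "?g \<theta> \<in> V" for \<theta> using H by simp
  have aV: "a \<in> V" using H[rule_format, of 0] by simp
  let ?F = "\<lambda>\<theta> y. ut (?g \<theta> - y) * \<phi> y"
  have cF: "continuous_on UNIV (\<lambda>p. ?F (fst p) (snd p))"
    by (intro continuous_intros continuous_on_compose2[OF cphi] continuous_on_compose2[OF cut]
        continuous_on_compose2[OF cont_circle]) auto
  have "integral {0..2*pi} (\<lambda>\<theta>. w (?g \<theta>)) = integral {0..2*pi} (\<lambda>\<theta>. integral B0 (?F \<theta>))"
    by (rule integral_cong) (simp add: rep[OF inV])
  also have "\<dots> = integral (cbox 0 (2*pi)) (\<lambda>\<theta>. integral (cbox (- One) One) (?F \<theta>))"
    by (simp add: B0_def cbox_interval)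
  also have "\<dots> = integral (cbox (- One) One) (\<lambda>y. integral (cbox 0 (2*pi)) (\<lambda>\<theta>. ?F \<theta> y))"
    by (rule integral_swap_continuous) (auto intro: continuous_on_subset[OF cF] simp: split_beta)
  finally have E1: "integral {0..2*pi} (\<lambda>\<theta>. w (?g \<theta>)) = integral B0 (\<lambda>y. integral {0..2*pi} (\<lambda>\<theta>. ?F \<theta> y))"
    by (simp add: B0_def cbox_interval)
  have pt: "2 * pi * (ut (a - y) * \<phi> y) \<le> integral {0..2*pi} (\<lambda>\<theta>. ?F \<theta> y)" for y
  proof (cases "\<phi> y = 0")
    case True then show ?thesis by simp
  next
    case False
    have disc: "\<forall>\<zeta>. cmod \<zeta> \<le> 1 \<longrightarrow> (a - y) + \<zeta> *s b \<in> \<Omega>"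
    proof (intro allI impI)
      fix \<zeta> :: complex assume "cmod \<zeta> \<le> 1"
      then have "a + \<zeta> *s b \<in> V" using H by blast
      from supp[OF False this] show "(a - y) + \<zeta> *s b \<in> \<Omega>" by (simp add: algebra_simps)
    qed
    with psh have P: "set_integrable lborel {0..2*pi} (\<lambda>\<theta>. u ((a - y) + cis \<theta> *s b))"
      "u (a - y) \<le> (1 / (2*pi)) * (LINT \<theta>:{0..2*pi}|lborel. u ((a - y) + cis \<theta> *s b))"
      unfolding psh_on_def by blast+
    have cg2: "continuous_on UNIV (\<lambda>\<theta>. ut ((a - y) + cis \<theta> *s b))"
      by (rule continuous_on_compose2[OF cut cont_circle]) auto
    have si2: "set_integrable lborel {0..2*pi} (\<lambda>\<theta>. ut ((a - y) + cis \<theta> *s b))"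
      unfolding set_integrable_def
      by (rule borel_integrable_compact) (auto intro: continuous_on_subset[OF cg2])
    have "(LINT \<theta>:{0..2*pi}|lborel. u ((a - y) + cis \<theta> *s b)) = (LINT \<theta>:{0..2*pi}|lborel. ut ((a - y) + cis \<theta> *s b))"
      by (rule set_lebesgue_integral_cong) (auto simp: ut disc)
    also have "\<dots> = integral {0..2*pi} (\<lambda>\<theta>. ut ((a - y) + cis \<theta> *s b))"
      using set_borel_integral_eq_integral(2)[OF si2] .
    finally have "2 * pi * ut (a - y) \<le> integral {0..2*pi} (\<lambda>\<theta>. ut ((a - y) + cis \<theta> *s b))"
      using P(2) ut[of "a - y"] disc[rule_format, of 0] by (simp add: field_simps)
    then have "2 * pi * ut (a - y) * \<phi> y \<le> integral {0..2*pi} (\<lambda>\<theta>. ut ((a - y) + cis \<theta> *s b)) * \<phi> y"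
      using phinn[of y] by (simp add: mult_right_mono)
    also have "\<dots> = integral {0..2*pi} (\<lambda>\<theta>. ?F \<theta> y)"
      by (simp add: algebra_simps)
    finally show ?thesis by simp
  qed
  have "2 * pi * w a = integral B0 (\<lambda>y. 2 * pi * (ut (a - y) * \<phi> y))"
    by (simp add: rep[OF aV])
  also have "\<dots> \<le> integral B0 (\<lambda>y. integral {0..2*pi} (\<lambda>\<theta>. ?F \<theta> y))"
  proof (rule integral_le)
    show "(\<lambda>y. 2 * pi * (ut (a - y) * \<phi> y)) integrable_on B0"
      unfolding B0_def
      by (intro integrable_continuous continuous_intros continuous_on_compose2[OF cphi]
          continuous_on_compose2[OF cut]) auto
    have "continuous_on UNIV (\<lambda>y. integral (cbox 0 (2*pi)) (\<lambda>\<theta>. ?F \<theta> y))"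
    proof (rule integral_continuous_on_param)
      have "continuous_on UNIV (\<lambda>p. ?F (snd p) (fst p))"
        by (intro continuous_intros continuous_on_compose2[OF cphi] continuous_on_compose2[OF cut]
          continuous_on_compose2[OF cont_circle]) auto
      then show "continuous_on (UNIV \<times> cbox 0 (2 * pi)) (\<lambda>(x, t). ?F t x)"
        by (auto intro: continuous_on_subset simp: split_beta)
    qed
    then show "(\<lambda>y. integral {0..2*pi} (\<lambda>\<theta>. ?F \<theta> y)) integrable_on B0"
      unfolding B0_def cbox_interval by (auto intro: integrable_continuous continuous_on_subset)
  qed (use pt in auto)
  finally show "w a \<le> (1 / (2*pi)) * (LINT \<theta>:{0..2*pi}|lborel. w (?g \<theta>))"
    using E1 L by (simp add: field_simps)
qed



lemma unif_smooth:
  fixes ut :: "'a::euclidean_space \<Rightarrow> real"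
  assumes cut: "continuous_on UNIV ut" and bV: "bounded V"
    and rep: "\<And>j z. z \<in> V \<Longrightarrow> w j z = integral B0 (\<lambda>y. ut (z - y) * \<phi> j y)"
    and phinn: "\<And>j y. \<phi> j y \<ge> 0" and cphi: "\<And>j. continuous_on UNIV (\<phi> j)"
    and int1: "\<And>j. integral B0 (\<phi> j) = 1"
    and supp: "\<And>j y. \<phi> j y \<noteq> 0 \<Longrightarrow> norm y < \<epsilon> j"
    and eps: "\<epsilon> \<longlonglongrightarrow> 0" and eps1: "\<And>j. \<epsilon> j \<le> 1"
  shows "uniform_limit V w ut sequentially"
  unfolding uniform_limit_iff
proof (intro allI impI)
  fix e :: real assume e: "e > 0"
  obtain R where R: "R > 0" "\<And>x. x \<in> V \<Longrightarrow> norm x \<le> R" using bV bounded_pos by metis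
  let ?K = "cball (0::'a) (R + 1)"
  have "uniformly_continuous_on ?K ut"
    by (rule compact_uniformly_continuous) (auto intro: continuous_on_subset[OF cut])
  then obtain d where d: "d > 0" "\<And>x x'. x \<in> ?K \<Longrightarrow> x' \<in> ?K \<Longrightarrow> dist x' x < d \<Longrightarrow> dist (ut x') (ut x) < e / 2"
    unfolding uniformly_continuous_on_def using e by (metis half_gt_zero)
  have "\<forall>\<^sub>F j in sequentially. \<epsilon> j < d" using eps d(1) order_tendstoD(2) by blast
  then show "\<forall>\<^sub>F j in sequentially. \<forall>x\<in>V. dist (w j x) (ut x) < e"
  proof (rule eventually_mono, intro ballI)
    fix j z assume ej: "\<epsilon> j < d" and z: "z \<in> V"
    have i1: "(\<lambda>y. ut (z - y) * \<phi> j y) integrable_on B0"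
      unfolding B0_def by (intro integrable_continuous continuous_intros continuous_on_compose2[OF cphi]
          continuous_on_compose2[OF cut]) auto
    have i2: "(\<lambda>y. ut z * \<phi> j y) integrable_on B0"
      unfolding B0_def by (intro integrable_continuous continuous_intros continuous_on_compose2[OF cphi]) auto
    have i3: "(\<lambda>y. e / 2 * \<phi> j y) integrable_on B0"
      unfolding B0_def by (intro integrable_continuous continuous_intros continuous_on_compose2[OF cphi]) auto
    have "w j z - ut z = integral B0 (\<lambda>y. ut (z - y) * \<phi> j y) - integral B0 (\<lambda>y. ut z * \<phi> j y)"
      using rep[OF z] int1[of j] by simp
    also have "\<dots> = integral B0 (\<lambda>y. ut (z - y) * \<phi> j y - ut z * \<phi> j y)"
      using integral_diff[OF i1 i2] by simp
    finally have eq: "w j z - ut z = integral B0 (\<lambda>y. ut (z - y) * \<phi> j y - ut z * \<phi> j y)" .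
    have "norm (integral B0 (\<lambda>y. ut (z - y) * \<phi> j y - ut z * \<phi> j y)) \<le> integral B0 (\<lambda>y. e / 2 * \<phi> j y)"
    proof (rule integral_norm_bound_integral)
      show "(\<lambda>y. ut (z - y) * \<phi> j y - ut z * \<phi> j y) integrable_on B0" using i1 i2 by (rule integrable_diff)
      show "(\<lambda>y. e / 2 * \<phi> j y) integrable_on B0" by (rule i3)
      fix y :: 'a assume "y \<in> B0"
      show "norm (ut (z - y) * \<phi> j y - ut z * \<phi> j y) \<le> e / 2 * \<phi> j y"
      proof (cases "\<phi> j y = 0")
        case True then show ?thesis by simp
      next
        case False
        then have ny: "norm y < \<epsilon> j" by (rule supp)
        have zK: "z \<in> ?K" using R(2)[OF z] by simp
        have "norm (z - y) \<le> norm z + norm y" by (rule norm_triangle_ineq4)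
        then have zyK: "z - y \<in> ?K" using R(2)[OF z] ny eps1[of j] by simp
        have "dist (z - y) z < d" using ny ej by (simp add: dist_norm)
        then have "\<bar>ut (z - y) - ut z\<bar> \<le> e / 2" using d(2)[OF zK zyK] by (simp add: dist_real_def)
        then have "\<bar>ut (z - y) - ut z\<bar> * \<phi> j y \<le> e / 2 * \<phi> j y"
          using phinn[of j y] by (rule mult_right_mono)
        moreover have "norm (ut (z - y) * \<phi> j y - ut z * \<phi> j y) = \<bar>ut (z - y) - ut z\<bar> * \<phi> j y"
          using phinn[of j y] by (simp add: left_diff_distrib[symmetric] abs_mult)
        ultimately show ?thesis by simp
      qed
    qed
    also have "\<dots> = e / 2" using int1[of j] by simp
    finally show "dist (w j z) (ut z) < e" using eq e by (simp add: dist_real_def)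
  qed
qed

lemma smoothing:
  fixes u ut :: "'n::finite cvec \<Rightarrow> real"
  assumes psh: "psh_on \<Omega> u" and cut: "continuous_on UNIV ut" and ut: "\<And>z. z \<in> \<Omega> \<Longrightarrow> ut z = u z"
    and V: "open V" "compact (closure V)" "closure V \<subseteq> \<Omega>"
  shows "\<exists>w. (\<forall>j. Ck_on 2 V (w j) \<and> psh_on V (w j)) \<and> uniform_limit V w u sequentially"
proof -
  have oO: "open \<Omega>" using psh by (simp add: psh_on_def)
  obtain \<delta>0 where d0: "\<delta>0 > 0" "(\<Union>x\<in>closure V. cball x \<delta>0) \<subseteq> \<Omega>"
    using compact_subset_open_imp_cball_epsilon_subset[OF V(2) oO V(3)] by blast
  define \<delta> where "\<delta> = min \<delta>0 1"
  have dpos: "\<delta> > 0" "\<delta> \<le> \<delta>0" "\<delta> \<le> 1" using d0 by (auto simp: \<delta>_def)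
  obtain R where R: "R > 0" "\<And>x. x \<in> closure V \<Longrightarrow> norm x \<le> R"
    using compact_imp_bounded[OF V(2)] bounded_pos by metis
  obtain r0 where r0: "r0 > 0" "\<And>x. x \<in> (B0::'n cvec set) \<Longrightarrow> norm x \<le> r0"
    using bounded_cbox[of "- One" "One::'n cvec"] bounded_pos unfolding B0_def by metis
  obtain A :: "'n cvec" where A: "cball 0 (R + r0) \<subseteq> cbox (- A) A"
    using bounded_subset_cbox_symmetric[OF bounded_cball] by blast
  define \<epsilon> where "\<epsilon> j = \<delta> / (real j + 2)" for j :: nat
  have epos: "\<epsilon> j > 0" for j using dpos by (simp add: \<epsilon>_def)
  have elt: "\<epsilon> j < \<delta>" for j using dpos by (simp add: \<epsilon>_def field_simps add_pos_nonneg)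
  have e1: "\<epsilon> j \<le> 1" for j using elt[of j] dpos by simp
  have eps0: "\<epsilon> \<longlonglongrightarrow> 0"
    unfolding \<epsilon>_def by real_asymp
  define N where "N j = integral (B0::'n cvec set) (bump (\<epsilon> j))" for j
  have Npos: "N j > 0" for j unfolding N_def using Nb_pos[OF epos] .
  define \<phi> where "\<phi> j y = inverse (N j) * bump (\<epsilon> j) y" for j and y :: "'n cvec"
  define \<phi>1 where "\<phi>1 j v y = inverse (N j) * bumpD1 (\<epsilon> j) v y" for j and v y :: "'n cvec"
  define \<phi>2 where "\<phi>2 j v1 v2 y = inverse (N j) * bumpD2 (\<epsilon> j) v1 v2 y" for j and v1 v2 y :: "'n cvec"
  define w where "w j = conv ut (cbox (- A) A) (\<phi> j)" for j
  have phinn: "\<phi> j y \<ge> 0" for j y using Npos[of j] bump_nonneg[of "\<epsilon> j" y] by (simp add: \<phi>_def)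
  have cphi: "continuous_on UNIV (\<phi> j)" for j unfolding \<phi>_def by (intro continuous_intros bump_cont)
  have supp: "norm y < \<epsilon> j" if "\<phi> j y \<noteq> 0" for j y
    using that bump_zero[of "\<epsilon> j" y] epos[of j] by (force simp: \<phi>_def)
  have int1: "integral B0 (\<phi> j) = 1" for j
  proof -
    have "\<phi> j = (\<lambda>y. inverse (N j) * bump (\<epsilon> j) y)" by (rule ext) (simp add: \<phi>_def)
    then show ?thesis using Npos[of j] by (simp add: N_def)
  qed
  have rep: "w j z = integral B0 (\<lambda>y. ut (z - y) * \<phi> j y)" if z: "z \<in> closure V" for j z
    unfolding w_def B0_def
  proof (rule conv_shift[OF cut cphi])
    fix y :: "'n cvec"
    show "y \<notin> cbox (- One) One \<Longrightarrow> \<phi> j y = 0"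
    proof -
      assume "y \<notin> cbox (- One) One"
      then have "\<not> norm y \<le> 1" using ball_B0[of y] unfolding B0_def by blast
      then show ?thesis using supp[of j y] e1[of j] by fastforce
    qed
    assume "y \<in> cbox (- One) One"
    then have "norm y \<le> r0" using r0 unfolding B0_def by blast
    moreover have "norm (z - y) \<le> norm z + norm y" by (rule norm_triangle_ineq4)
    ultimately have "z - y \<in> cball 0 (R + r0)" using R(2)[OF z] by simp
    then show "z - y \<in> cbox (- A) A" using A by blast
  qed
  have Ck: "Ck_on 2 V (w j)" for j
  proof -
    have c1: "continuous_on UNIV (\<phi>1 j v)" for v unfolding \<phi>1_def by (intro continuous_intros bumpD1_cont)
    have c2: "continuous_on UNIV (\<phi>2 j v1 v2)" for v1 v2 unfolding \<phi>2_def by (intro continuous_intros bumpD2_cont)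
    have d1: "((\<lambda>s. \<phi> j (y + s *\<^sub>R v)) has_real_derivative \<phi>1 j v y) (at 0)" for v y
      unfolding \<phi>_def \<phi>1_def by (intro DERIV_cmult bump_deriv)
    have d2: "((\<lambda>s. \<phi>1 j v2 (y + s *\<^sub>R v1)) has_real_derivative \<phi>2 j v1 v2 y) (at 0)" for v1 v2 y
      unfolding \<phi>1_def \<phi>2_def by (intro DERIV_cmult bumpD1_deriv)
    show ?thesis unfolding w_def by (rule conv_Ck2[OF cut cphi c1 c2 d1 d2 V(1)])
  qed
  have cw: "continuous_on UNIV (w j)" for j unfolding w_def by (rule conv_cont[OF cut cphi])
  have psh_w: "psh_on V (w j)" for j
  proof (rule psh_smooth[OF psh cut ut V(1) cw[of j] _ cphi[of j] phinn[of j]])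
    show "w j z = integral B0 (\<lambda>y. ut (z - y) * \<phi> j y)" if "z \<in> V" for z
      using rep that closure_subset by blast
    fix y z assume "\<phi> j y \<noteq> 0" "z \<in> V"
    then have ny: "norm y < \<delta>0" and zV: "z \<in> closure V"
      using supp[of j y] elt[of j] dpos closure_subset by auto
    have "z - y \<in> cball z \<delta>0" using ny by (simp add: dist_norm)
    then show "z - y \<in> \<Omega>" using d0(2) zV by blast
  qed
  have "uniform_limit V w ut sequentially"
  proof (rule unif_smooth[OF cut _ _ phinn cphi int1 supp eps0 e1])
    show "bounded V" using compact_imp_bounded[OF V(2)] bounded_subset closure_subset by blast
    show "\<And>j z. z \<in> V \<Longrightarrow> w j z = integral B0 (\<lambda>y. ut (z - y) * \<phi> j y)"
      using rep closure_subset by blast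
  qed
  moreover have "\<forall>z\<in>V. ut z = u z" using V(3) closure_subset ut by blast
  ultimately have "uniform_limit V w u sequentially"
    unfolding uniform_limit_iff by simp
  then show ?thesis using Ck psh_w by blast
qed



lemma infdist_le_subset:
  fixes S :: "'a::heine_borel set"
  assumes "closed S" "S \<noteq> {}" "(\<Union>x\<in>S. cball x e) \<subseteq> \<Omega>" "infdist y S \<le> e"
  shows "y \<in> \<Omega>"
proof -
  obtain x where "x \<in> S" "infdist y S = dist y x" using infdist_attains_inf[OF assms(1,2)] by blast
  then have "y \<in> cball x e" using assms(4) by (simp add: dist_commute)
  then show ?thesis using assms(3) \<open>x \<in> S\<close> by blast
qed

lemma MA_int_eq:
  fixes u ut h :: "'n::finite cvec \<Rightarrow> real"
  assumes psh: "psh_on \<Omega> u" and cut: "continuous_on UNIV ut" and ut: "\<And>z. z \<in> \<Omega> \<Longrightarrow> ut z = u z"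
    and bO: "bounded \<Omega>" and m1: "is_MA \<Omega> u \<nu>1" and m2: "is_MA \<Omega> u \<nu>2"
    and h: "continuous_on UNIV h" "compact (closure {z. h z \<noteq> 0})" "closure {z. h z \<noteq> 0} \<subseteq> \<Omega>"
  shows "integral\<^sup>L \<nu>1 h = integral\<^sup>L \<nu>2 h"
proof (cases "closure {z. h z \<noteq> 0} = {}")
  case True
  then have "h = (\<lambda>z. 0)" using closure_subset by fastforce
  then show ?thesis by simp
next
  case False
  let ?S = "closure {z. h z \<noteq> 0}"
  have oO: "open \<Omega>" using psh by (simp add: psh_on_def)
  obtain e where e: "e > 0" "(\<Union>x\<in>?S. cball x e) \<subseteq> \<Omega>"
    using compact_subset_open_imp_cball_epsilon_subset[OF h(2) oO h(3)] by blast
  define V where "V = {y. infdist y ?S < e / 2}"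
  have oV: "open V" unfolding V_def
    by (rule open_Collect_less) (intro continuous_intros)+
  have cV: "closure V \<subseteq> {y. infdist y ?S \<le> e / 2}"
    unfolding V_def by (rule closure_minimal) (auto intro!: closed_Collect_le continuous_intros)
  have VO: "closure V \<subseteq> \<Omega>"
  proof
    fix y assume "y \<in> closure V"
    then have "infdist y ?S \<le> e" using cV e(1) by auto
    then show "y \<in> \<Omega>" using infdist_le_subset[OF closed_closure False e(2)] by blast
  qed
  have kV: "compact (closure V)"
    using VO bO bounded_subset compact_eq_bounded_closed by blast
  have SV: "?S \<subseteq> V" unfolding V_def using e(1) by auto
  obtain w where w: "\<forall>j. Ck_on 2 V (w j) \<and> psh_on V (w j)" "uniform_limit V w u sequentially"
    using smoothing[OF psh cut ut oV kV VO] by blast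
  have "(\<lambda>j. integral\<^sup>L lborel (\<lambda>z. h z * MA_density (w j) z)) \<longlonglongrightarrow> integral\<^sup>L \<nu>1 h"
    using m1 unfolding is_MA_def using oV kV VO w h SV by blast
  moreover have "(\<lambda>j. integral\<^sup>L lborel (\<lambda>z. h z * MA_density (w j) z)) \<longlonglongrightarrow> integral\<^sup>L \<nu>2 h"
    using m2 unfolding is_MA_def using oV kV VO w h SV by blast
  ultimately show ?thesis by (rule LIMSEQ_unique)
qed

lemma MA_compact_eq:
  fixes \<nu>1 \<nu>2 :: "'a::euclidean_space measure"
  assumes hint: "\<And>h. continuous_on UNIV h \<Longrightarrow> compact (closure {z. h z \<noteq> 0}) \<Longrightarrow>
       closure {z. h z \<noteq> 0} \<subseteq> \<Omega> \<Longrightarrow> integral\<^sup>L \<nu>1 h = integral\<^sup>L \<nu>2 (h :: 'a \<Rightarrow> real)"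
    and s1: "sets \<nu>1 = sets borel" and s2: "sets \<nu>2 = sets borel"
    and fin1: "\<forall>K. compact K \<and> K \<subseteq> \<Omega> \<longrightarrow> emeasure \<nu>1 K < \<infinity>"
    and fin2: "\<forall>K. compact K \<and> K \<subseteq> \<Omega> \<longrightarrow> emeasure \<nu>2 K < \<infinity>"
    and oO: "open \<Omega>" and bO: "bounded \<Omega>"
    and K: "compact K" "K \<subseteq> \<Omega>"
  shows "emeasure \<nu>1 K = emeasure \<nu>2 K"
proof (cases "K = {}")
  case True then show ?thesis by simp
next
  case False
  have cK: "closed K" using K(1) compact_imp_closed by blast
  obtain e where e: "e > 0" "(\<Union>x\<in>K. cball x e) \<subseteq> \<Omega>"
    using compact_subset_open_imp_cball_epsilon_subset[OF K(1) oO K(2)] by blast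
  define T where "T = {z. infdist z K \<le> e}"
  have cT: "closed T" unfolding T_def by (auto intro!: closed_Collect_le continuous_intros)
  have TO: "T \<subseteq> \<Omega>" unfolding T_def using infdist_le_subset[OF cK False e(2)] by blast
  have kT: "compact T" using TO bO bounded_subset cT compact_eq_bounded_closed by blast
  define h where "h j z = max 0 (1 - real (Suc j) * infdist z K / e)" for j z
  have ch: "continuous_on UNIV (h j)" for j unfolding h_def using e(1) by (intro continuous_intros) auto
  have hT: "{z. h j z \<noteq> 0} \<subseteq> T" for j
  proof
    fix z assume "z \<in> {z. h j z \<noteq> 0}"
    then have "\<not> 1 - real (Suc j) * infdist z K / e \<le> 0"
      unfolding h_def using max_absorb1[of "1 - real (Suc j) * infdist z K / e" 0] by auto
    then have "real (Suc j) * infdist z K / e < 1" by linarith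
    then have "real (Suc j) * infdist z K < e" using e(1) by (simp add: field_simps)
    moreover have "infdist z K \<le> real (Suc j) * infdist z K"
      using infdist_nonneg[of z K] by (simp add: mult_le_cancel_right1)
    ultimately show "z \<in> T" by (simp add: T_def)
  qed
  have hcl: "closure {z. h j z \<noteq> 0} \<subseteq> T" for j using hT cT closure_minimal by blast
  have hint2: "integral\<^sup>L \<nu>1 (h j) = integral\<^sup>L \<nu>2 (h j)" for j
  proof (rule hint[OF ch])
    show "compact (closure {z. h j z \<noteq> 0})"
      using compact_Int_closed[OF kT closed_closure, of "{z. h j z \<noteq> 0}"] hcl[of j]
      by (metis Int_absorb1)
    show "closure {z. h j z \<noteq> 0} \<subseteq> \<Omega>" using hcl TO by blast
  qed
  have lim: "(\<lambda>j. h j z) \<longlonglongrightarrow> indicator K z" for z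
  proof (cases "z \<in> K")
    case True then show ?thesis by (simp add: h_def)
  next
    case False
    then have d: "infdist z K > 0" using infdist_pos_not_in_closed[OF cK \<open>K \<noteq> {}\<close>] by blast
    obtain n :: nat where n: "e / infdist z K < real n" using reals_Archimedean2 by blast
    have "\<forall>\<^sub>F j in sequentially. h j z = 0"
      unfolding eventually_sequentially
    proof (intro exI allI impI)
      fix j assume "n \<le> j"
      then have "e < real (Suc j) * infdist z K"
        using n d by (simp add: field_simps) (smt (verit, best) mult_right_mono of_nat_mono)
      then show "h j z = 0" using e(1) by (simp add: h_def max_def field_simps)
    qed
    then show ?thesis using False by (simp add: tendsto_eventually)
  qed
  have bound: "norm (h j z) \<le> indicator T z" for j z
  proof (cases "z \<in> T")
    case True then show ?thesis using e(1) infdist_nonneg[of z K] by (simp add: h_def)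
  next
    case False then have "h j z = 0" using hT[of j] by blast
    then show ?thesis using False by simp
  qed
  have conv: "(\<lambda>j. integral\<^sup>L \<nu> (h j)) \<longlonglongrightarrow> measure \<nu> K"
    if s: "sets \<nu> = sets borel" and fin: "\<forall>K. compact K \<and> K \<subseteq> \<Omega> \<longrightarrow> emeasure \<nu> K < \<infinity>" for \<nu>
  proof -
    have sp: "space \<nu> = UNIV" using sets_eq_imp_space_eq[OF s] by simp
    have meas: "f \<in> borel_measurable \<nu>" if "f \<in> borel_measurable borel" for f :: "'a \<Rightarrow> real"
      using that measurable_cong_sets[OF s refl, of "borel :: real measure"] by simp
    have "(\<lambda>j. integral\<^sup>L \<nu> (h j)) \<longlonglongrightarrow> integral\<^sup>L \<nu> (indicator K)"
    proof (rule integral_dominated_convergence[where w="indicator T"])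
      show "(indicator K :: 'a \<Rightarrow> real) \<in> borel_measurable \<nu>"
        by (rule meas) (intro borel_measurable_indicator borel_closed cK)
      show "h j \<in> borel_measurable \<nu>" for j by (rule meas) (rule borel_measurable_continuous_onI[OF ch])
      show "integrable \<nu> (indicator T :: 'a \<Rightarrow> real)"
        using fin kT TO cT s sp by (simp add: integrable_indicator_iff)
      show "AE x in \<nu>. (\<lambda>j. h j x) \<longlonglongrightarrow> indicator K x" using lim by simp
      show "AE x in \<nu>. norm (h j x) \<le> indicator T x" for j using bound by simp
    qed
    then show ?thesis using sp by simp
  qed
  have "measure \<nu>1 K = measure \<nu>2 K"
    using LIMSEQ_unique[OF conv[OF s1 fin1]] conv[OF s2 fin2] hint2 by simp
  moreover have "emeasure \<nu>1 K \<noteq> \<infinity>" "emeasure \<nu>2 K \<noteq> \<infinity>" using fin1 fin2 K by auto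
  ultimately show ?thesis by (simp add: emeasure_eq_ennreal_measure)
qed

lemma MA_measure_eq:
  fixes \<nu>1 \<nu>2 :: "'a::euclidean_space measure"
  assumes ceq: "\<And>K. compact K \<Longrightarrow> K \<subseteq> \<Omega> \<Longrightarrow> emeasure \<nu>1 K = emeasure \<nu>2 K"
    and s1: "sets \<nu>1 = sets borel" and s2: "sets \<nu>2 = sets borel"
    and fin1: "\<forall>K. compact K \<and> K \<subseteq> \<Omega> \<longrightarrow> emeasure \<nu>1 K < \<infinity>"
    and null1: "emeasure \<nu>1 (UNIV - \<Omega>) = 0" and null2: "emeasure \<nu>2 (UNIV - \<Omega>) = 0"
    and oO: "open \<Omega>" and bO: "bounded \<Omega>"
  shows "\<nu>1 = \<nu>2"
proof -
  have ne: "- \<Omega> \<noteq> {}"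
  proof
    assume "- \<Omega> = {}"
    then have "\<Omega> = UNIV" by auto
    then show False using bO by simp
  qed
  have cc: "closed (- \<Omega>)" using oO by auto
  define Km where "Km m = {z. inverse (real (Suc m)) \<le> infdist z (- \<Omega>)}" for m
  have Kc: "closed (Km m)" for m unfolding Km_def by (auto intro!: closed_Collect_le continuous_intros)
  have KO: "Km m \<subseteq> \<Omega>" for m
  proof
    fix z assume z: "z \<in> Km m"
    show "z \<in> \<Omega>"
    proof (rule ccontr)
      assume "z \<notin> \<Omega>"
      then have "infdist z (- \<Omega>) = 0" by simp
      then show False using z by (simp add: Km_def)
    qed
  qed
  have Kk: "compact (Km m)" for m using KO bO bounded_subset Kc compact_eq_bounded_closed by blast
  have Kinc: "incseq Km"
    unfolding incseq_def Km_def
  proof (intro allI impI subsetI)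
    fix m n :: nat and z assume "m \<le> n" "z \<in> {z. inverse (real (Suc m)) \<le> infdist z (- \<Omega>)}"
    moreover have "inverse (real (Suc n)) \<le> inverse (real (Suc m))"
      using \<open>m \<le> n\<close> by (simp add: le_imp_inverse_le)
    ultimately show "z \<in> {z. inverse (real (Suc n)) \<le> infdist z (- \<Omega>)}"
      by (metis (mono_tags) mem_Collect_eq order_trans)
  qed
  have KU: "(\<Union>m. Km m) = \<Omega>"
  proof
    show "(\<Union>m. Km m) \<subseteq> \<Omega>" using KO by blast
    show "\<Omega> \<subseteq> (\<Union>m. Km m)"
    proof
      fix z assume "z \<in> \<Omega>"
      then have "infdist z (- \<Omega>) > 0" using infdist_pos_not_in_closed[OF cc ne] by simp
      then obtain n where n: "n > 0" "inverse (real n) < infdist z (- \<Omega>)"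
        using ex_inverse_of_nat_less by blast
      then have "z \<in> Km (n - 1)" by (simp add: Km_def)
      then show "z \<in> (\<Union>m. Km m)" by blast
    qed
  qed
  have sb: "sets (borel :: 'a measure) = sigma_sets UNIV (Collect closed)"
    by (simp add: borel_eq_closed)
  have dens: "density \<nu>1 (indicator (Km m)) = density \<nu>2 (indicator (Km m))" for m
  proof (rule measure_eqI_generator_eq[where E="Collect closed" and \<Omega>=UNIV and A="\<lambda>_. UNIV"])
    show "Int_stable (Collect closed :: 'a set set)" by (auto intro: Int_stableI)
    show "Collect closed \<subseteq> Pow UNIV" by simp
    have Kb: "Km m \<in> sets borel" using Kc by simp
    fix X :: "'a set" assume "X \<in> Collect closed"
    then have X: "X \<in> sets borel" "closed X" by auto
    have "emeasure (density \<nu>1 (indicator (Km m))) X = emeasure \<nu>1 (Km m \<inter> X)"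
      using emeasure_restricted[of "Km m" \<nu>1 X] Kb X s1 by simp
    also have "\<dots> = emeasure \<nu>2 (Km m \<inter> X)"
      using ceq[of "Km m \<inter> X"] KO[of m] compact_Int_closed[OF Kk X(2)] by blast
    also have "\<dots> = emeasure (density \<nu>2 (indicator (Km m))) X"
      using emeasure_restricted[of "Km m" \<nu>2 X] Kb X s2 by simp
    finally show "emeasure (density \<nu>1 (indicator (Km m))) X = emeasure (density \<nu>2 (indicator (Km m))) X" .
  next
    show "sets (density \<nu>1 (indicator (Km m))) = sigma_sets UNIV (Collect closed)" using s1 sb by simp
    show "sets (density \<nu>2 (indicator (Km m))) = sigma_sets UNIV (Collect closed)" using s2 sb by simp
    show "range (\<lambda>_. UNIV) \<subseteq> Collect closed" by simp
    show "(\<Union>i. UNIV) = UNIV" by simp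
    have Kb: "Km m \<in> sets borel" using Kc by simp
    have "emeasure (density \<nu>1 (indicator (Km m))) UNIV = emeasure \<nu>1 (Km m)"
      using emeasure_restricted[of "Km m" \<nu>1 UNIV] Kb s1 sets.top[of \<nu>1] sets_eq_imp_space_eq[OF s1] by simp
    moreover have "emeasure \<nu>1 (Km m) < \<infinity>" using fin1 Kk[of m] KO[of m] by blast
    ultimately show "emeasure (density \<nu>1 (indicator (Km m))) UNIV \<noteq> \<infinity>" by simp
  qed
  show ?thesis
  proof (rule measure_eqI)
    show "sets \<nu>1 = sets \<nu>2" using s1 s2 by simp
    fix A assume "A \<in> sets \<nu>1"
    then have A: "A \<in> sets borel" using s1 by simp
    have Ob: "\<Omega> \<in> sets borel" using oO by simp
    have red: "emeasure \<nu> A = (SUP m. emeasure (density \<nu> (indicator (Km m))) A)"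
      if s: "sets \<nu> = sets borel" and nl: "emeasure \<nu> (UNIV - \<Omega>) = 0" for \<nu>
    proof -
      have "UNIV - \<Omega> \<in> null_sets \<nu>" using nl s Ob by (auto simp: null_sets_def)
      then have "A - \<Omega> \<in> null_sets \<nu>" using null_sets_subset[of "UNIV - \<Omega>" \<nu> "A - \<Omega>"] A Ob s by auto
      then have "emeasure \<nu> ((A \<inter> \<Omega>) \<union> (A - \<Omega>)) = emeasure \<nu> (A \<inter> \<Omega>)"
        using emeasure_Un_null_set[of "A \<inter> \<Omega>" \<nu> "A - \<Omega>"] A Ob s by auto
      moreover have "(A \<inter> \<Omega>) \<union> (A - \<Omega>) = A" by blast
      ultimately have "emeasure \<nu> A = emeasure \<nu> (A \<inter> \<Omega>)" by simp
      also have "A \<inter> \<Omega> = (\<Union>m. Km m \<inter> A)" using KU by blast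
      also have "emeasure \<nu> (\<Union>m. Km m \<inter> A) = (SUP m. emeasure \<nu> (Km m \<inter> A))"
      proof (rule SUP_emeasure_incseq[symmetric])
        show "range (\<lambda>m. Km m \<inter> A) \<subseteq> sets \<nu>" using Kc A s by auto
        show "incseq (\<lambda>m. Km m \<inter> A)" using Kinc unfolding incseq_def by blast
      qed
      also have "\<dots> = (SUP m. emeasure (density \<nu> (indicator (Km m))) A)"
        using emeasure_restricted[of "Km _" \<nu> A] Kc A s by simp
      finally show ?thesis .
    qed
    show "emeasure \<nu>1 A = emeasure \<nu>2 A"
      using red[OF s1 null1] red[OF s2 null2] dens by simp
  qed
qed



lemma MA_unique:
  fixes u :: "'n::finite cvec \<Rightarrow> real"
  assumes psh: "psh_on \<Omega> u" and cu: "continuous_on (closure \<Omega>) u" and bO: "bounded \<Omega>"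
    and m1: "is_MA \<Omega> u \<nu>1" and m2: "is_MA \<Omega> u \<nu>2"
  shows "\<nu>1 = \<nu>2"
proof -
  have oO: "open \<Omega>" using psh by (simp add: psh_on_def)
  have "closedin (top_of_set UNIV) (closure \<Omega>)" by (simp add: closedin_closed_eq)
  then obtain ut where ut: "continuous_on UNIV ut" "\<And>x. x \<in> closure \<Omega> \<Longrightarrow> ut x = u x"
    using Tietze_unbounded[OF cu] by metis
  have ut': "\<And>x. x \<in> \<Omega> \<Longrightarrow> ut x = u x" using ut(2) closure_subset by blast
  have s1: "sets \<nu>1 = sets borel" and s2: "sets \<nu>2 = sets borel"
    and fin1: "\<forall>K. compact K \<and> K \<subseteq> \<Omega> \<longrightarrow> emeasure \<nu>1 K < \<infinity>"
    and fin2: "\<forall>K. compact K \<and> K \<subseteq> \<Omega> \<longrightarrow> emeasure \<nu>2 K < \<infinity>"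
    and null1: "emeasure \<nu>1 (UNIV - \<Omega>) = 0" and null2: "emeasure \<nu>2 (UNIV - \<Omega>) = 0"
    using m1[unfolded is_MA_def, THEN conjunct1] m2[unfolded is_MA_def, THEN conjunct1]
      m1[unfolded is_MA_def, THEN conjunct2, THEN conjunct2, THEN conjunct1]
      m2[unfolded is_MA_def, THEN conjunct2, THEN conjunct2, THEN conjunct1]
      m1[unfolded is_MA_def, THEN conjunct2, THEN conjunct1]
      m2[unfolded is_MA_def, THEN conjunct2, THEN conjunct1] by auto
  have hint: "integral\<^sup>L \<nu>1 h = integral\<^sup>L \<nu>2 h"
    if "continuous_on UNIV h" "compact (closure {z. h z \<noteq> 0})" "closure {z. h z \<noteq> 0} \<subseteq> \<Omega>"
    for h :: "'n cvec \<Rightarrow> real"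
    using MA_int_eq[OF psh ut(1) ut' bO m1 m2 that] .
  have ceq: "emeasure \<nu>1 K = emeasure \<nu>2 K" if "compact K" "K \<subseteq> \<Omega>" for K
    using MA_compact_eq[OF hint s1 s2 fin1 fin2 oO bO that] by blast
  show ?thesis using MA_measure_eq[OF ceq s1 s2 fin1 null1 null2 oO bO] by blast
qed

lemma MA_eq:
  fixes u :: "'n::finite cvec \<Rightarrow> real"
  assumes psh: "psh_on \<Omega> u" and cu: "continuous_on (closure \<Omega>) u" and bO: "bounded \<Omega>"
    and m: "is_MA \<Omega> u \<nu>"
  shows "MA \<Omega> u = \<nu>"
  unfolding MA_def
proof (rule the_equality)
  show "is_MA \<Omega> u \<nu>" by (rule m)
  fix \<nu>' assume "is_MA \<Omega> u \<nu>'"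
  then show "\<nu>' = \<nu>" using MA_unique[OF psh cu bO _ m] by blast
qed

lemma max_principle:
  fixes u :: "'n::finite cvec \<Rightarrow> real"
  assumes psh: "psh_on \<Omega> u" and cu: "continuous_on (closure \<Omega>) u" and bO: "bounded \<Omega>"
    and bd: "\<forall>z\<in>frontier \<Omega>. u z \<le> 0"
  shows "\<forall>z\<in>\<Omega>. u z \<le> 0"
proof (rule ccontr)
  assume "\<not> (\<forall>z\<in>\<Omega>. u z \<le> 0)"
  then obtain z0 where z0: "z0 \<in> \<Omega>" "u z0 > 0" by force
  have oO: "open \<Omega>" using psh by (simp add: psh_on_def)
  have kc: "compact (closure \<Omega>)" using bO by (simp add: compact_closure)
  obtain zm where zm: "zm \<in> closure \<Omega>" "\<And>y. y \<in> closure \<Omega> \<Longrightarrow> u y \<le> u zm"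
    using continuous_attains_sup[OF kc _ cu] z0(1) closure_subset by blast
  define M where "M = u zm"
  have Mpos: "M > 0" using zm(2)[of z0] z0 closure_subset M_def by force
  define S where "S = {z \<in> closure \<Omega>. u z = M}"
  have cS: "closed S" unfolding S_def by (rule continuous_closed_preimage_constant[OF cu closed_closure])
  have "S \<subseteq> closure \<Omega>" unfolding S_def by blast
  then have kS: "compact S" using cS bounded_subset[OF bounded_closure[OF bO]] compact_eq_bounded_closed by blast
  have neS: "S \<noteq> {}" using zm M_def S_def by blast
  obtain i0 :: 'n where True by blast
  define l where "l z = Re (z $ i0)" for z :: "'n cvec"
  have cl: "continuous_on S l" unfolding l_def by (intro continuous_intros)
  obtain a where a: "a \<in> S" "\<And>y. y \<in> S \<Longrightarrow> l y \<le> l a"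
    using continuous_attains_sup[OF kS neS cl] by blast
  have aO: "a \<in> \<Omega>"
  proof -
    have "a \<in> closure \<Omega>" "u a = M" using a(1) S_def by auto
    then have "a \<notin> frontier \<Omega>" using bd Mpos by force
    then show ?thesis using \<open>a \<in> closure \<Omega>\<close> closure_Un_frontier by blast
  qed
  obtain r where r: "r > 0" "ball a r \<subseteq> \<Omega>" using oO aO openE by blast
  define b where "b = axis i0 (complex_of_real (r / 2))"
  have nb: "norm (\<zeta> *s b) \<le> cmod \<zeta> * (r / 2)" for \<zeta>
  proof -
    have "norm (\<zeta> *s b) \<le> (\<Sum>i\<in>UNIV. norm ((\<zeta> *s b) $ i))" by (simp add: norm_vec_def L2_set_le_sum)
    also have "\<dots> = (\<Sum>i\<in>UNIV. if i = i0 then cmod \<zeta> * (r / 2) else 0)"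
      by (rule sum.cong) (use r(1) in \<open>auto simp: b_def axis_def norm_mult\<close>)
    also have "\<dots> = cmod \<zeta> * (r / 2)" by simp
    finally show ?thesis .
  qed
  have disc: "\<forall>\<zeta>. cmod \<zeta> \<le> 1 \<longrightarrow> a + \<zeta> *s b \<in> \<Omega>"
  proof (intro allI impI)
    fix \<zeta> :: complex assume "cmod \<zeta> \<le> 1"
    then have "cmod \<zeta> * (r / 2) \<le> 1 * (r / 2)" using r(1) by (intro mult_right_mono) auto
    then have "norm (\<zeta> *s b) < r" using nb[of \<zeta>] r(1) by linarith
    then have "a + \<zeta> *s b \<in> ball a r" by (simp add: dist_norm)
    then show "a + \<zeta> *s b \<in> \<Omega>" using r(2) by blast
  qed
  from psh disc have P: "set_integrable lborel {0..2*pi} (\<lambda>\<theta>. u (a + cis \<theta> *s b))"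
      "u a \<le> (1 / (2*pi)) * (LINT \<theta>:{0..2*pi}|lborel. u (a + cis \<theta> *s b))"
    unfolding psh_on_def by blast+
  let ?g = "\<lambda>\<theta>. M - u (a + cis \<theta> *s b)"
  have inO: "a + cis \<theta> *s b \<in> \<Omega>" for \<theta> using disc by simp
  have cu': "continuous_on \<Omega> u" using cu closure_subset continuous_on_subset by blast
  have cg: "continuous_on {0..2*pi} ?g"
    by (intro continuous_intros continuous_on_compose2[OF cu'] continuous_on_subset[OF cont_circle])
      (auto simp: inO)
  have gnn: "?g \<theta> \<ge> 0" for \<theta> using zm(2)[of "a + cis \<theta> *s b"] inO[of \<theta>] closure_subset M_def by force
  have iu: "(\<lambda>\<theta>. u (a + cis \<theta> *s b)) integrable_on {0..2*pi}"
    using set_borel_integral_eq_integral(1)[OF P(1)] .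
  have L: "(LINT \<theta>:{0..2*pi}|lborel. u (a + cis \<theta> *s b)) = integral {0..2*pi} (\<lambda>\<theta>. u (a + cis \<theta> *s b))"
    using set_borel_integral_eq_integral(2)[OF P(1)] .
  have ig: "integral {0..2*pi} ?g = 2 * pi * M - integral {0..2*pi} (\<lambda>\<theta>. u (a + cis \<theta> *s b))"
    using integral_diff[OF integrable_const_ivl iu] by simp
  have "u a = M" using a(1) S_def by simp
  then have "integral {0..2*pi} ?g \<le> 0" using P(2) L ig by (simp add: field_simps)
  moreover have "integral {0..2*pi} ?g \<ge> 0"
    by (rule integral_nonneg) (use cg integrable_continuous_interval gnn in auto)
  ultimately have "integral {0..2*pi} ?g = 0" by simp
  then have "\<forall>\<theta>\<in>{0..2*pi}. ?g \<theta> = 0" using integral_eq_0_iff[OF cg _ gnn] by simp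
  then have "?g 0 = 0" by (metis atLeastAtMost_iff order_refl mult_nonneg_nonneg pi_ge_zero zero_le_numeral)
  then have "u (a + b) = M" by simp
  then have "a + b \<in> S" using inO[of 0] closure_subset S_def by auto
  then have "l (a + b) \<le> l a" by (rule a(2))
  moreover have "l (a + b) = l a + r / 2" by (simp add: l_def b_def)
  ultimately show False using r(1) by simp
qed



lemma young_np:
  fixes x y :: real
  assumes "x \<ge> 0" "y \<ge> 0"
  shows "x * y ^ n \<le> (x ^ Suc n + real n * y ^ Suc n) / real (Suc n)"
proof (cases "y = 0")
  case True
  then show ?thesis using assms by (cases n) auto
next
  case False
  then have yp: "y > 0" using assms by simp
  have "1 + real (Suc n) * (x / y - 1) \<le> (1 + (x / y - 1)) ^ Suc n"
    by (rule Bernoulli_inequality) (use assms yp in simp)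
  then have B: "1 + real (Suc n) * (x / y - 1) \<le> x ^ Suc n / y ^ Suc n"
    by (simp add: power_divide)
  have "(1 + real (Suc n) * (x / y - 1)) * y ^ Suc n \<le> x ^ Suc n / y ^ Suc n * y ^ Suc n"
    using B yp by (intro mult_right_mono) auto
  also have "\<dots> = x ^ Suc n" using yp by simp
  also have "(1 + real (Suc n) * (x / y - 1)) * y ^ Suc n = y ^ Suc n + real (Suc n) * x * y ^ n - real (Suc n) * y ^ Suc n"
    using yp by (simp add: field_simps)
  finally have "real (Suc n) * (x * y ^ n) \<le> x ^ Suc n + real n * y ^ Suc n"
    by (simp add: algebra_simps)
  then show ?thesis by (simp add: field_simps)
qed

lemma holder_np:
  fixes X Y f :: "'a::euclidean_space \<Rightarrow> real"
  assumes iX: "set_integrable lborel \<Omega> (\<lambda>z. X z ^ Suc n * f z)"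
    and iY: "set_integrable lborel \<Omega> (\<lambda>z. Y z ^ Suc n * f z)"
    and iXY: "set_integrable lborel \<Omega> (\<lambda>z. X z * Y z ^ n * f z)"
    and X0: "\<And>z. z \<in> \<Omega> \<Longrightarrow> X z \<ge> 0" and Y0: "\<And>z. z \<in> \<Omega> \<Longrightarrow> Y z \<ge> 0"
    and f0: "\<And>z. z \<in> \<Omega> \<Longrightarrow> f z \<ge> 0"
    and A: "(LINT z:\<Omega>|lborel. X z ^ Suc n * f z) > 0"
    and B: "(LINT z:\<Omega>|lborel. Y z ^ Suc n * f z) > 0"
  shows "(LINT z:\<Omega>|lborel. X z * Y z ^ n * f z) \<le>
     (LINT z:\<Omega>|lborel. X z ^ Suc n * f z) powr (1 / real (Suc n)) *
     ((LINT z:\<Omega>|lborel. Y z ^ Suc n * f z) powr (1 / real (Suc n))) ^ n"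
proof -
  define a where "a = (LINT z:\<Omega>|lborel. X z ^ Suc n * f z)"
  define b where "b = (LINT z:\<Omega>|lborel. Y z ^ Suc n * f z)"
  define \<alpha> where "\<alpha> = a powr (1 / real (Suc n))"
  define \<beta> where "\<beta> = b powr (1 / real (Suc n))"
  have ap: "a > 0" "b > 0" using A B by (simp_all add: a_def b_def)
  have alp: "\<alpha> > 0" "\<beta> > 0" using ap by (simp_all add: \<alpha>_def \<beta>_def)
  have pw: "(c powr (1 / real (Suc n))) ^ Suc n = c" if "c > 0" for c :: real
  proof -
    have "(c powr (1 / real (Suc n))) ^ Suc n = (c powr (1 / real (Suc n))) powr real (Suc n)"
      using that by (intro powr_realpow[symmetric]) simp
    also have "\<dots> = c" using that by (simp add: powr_powr del: of_nat_Suc)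
    finally show ?thesis .
  qed
  have pa: "\<alpha> ^ Suc n = a" "\<beta> ^ Suc n = b" using pw ap by (simp_all add: \<alpha>_def \<beta>_def)
  have pt: "X z * Y z ^ n * f z \<le> \<alpha> * \<beta> ^ n * ((X z ^ Suc n * f z) / a + real n * (Y z ^ Suc n * f z) / b) / real (Suc n)"
    if z: "z \<in> \<Omega>" for z
  proof -
    have "(X z / \<alpha>) * (Y z / \<beta>) ^ n \<le> ((X z / \<alpha>) ^ Suc n + real n * (Y z / \<beta>) ^ Suc n) / real (Suc n)"
      using X0[OF z] Y0[OF z] alp by (intro young_np) auto
    then have "(\<alpha> * \<beta> ^ n * f z) * ((X z / \<alpha>) * (Y z / \<beta>) ^ n) \<le>
        (\<alpha> * \<beta> ^ n * f z) * (((X z / \<alpha>) ^ Suc n + real n * (Y z / \<beta>) ^ Suc n) / real (Suc n))"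
      using f0[OF z] alp by (intro mult_left_mono) auto
    also have "(\<alpha> * \<beta> ^ n * f z) * ((X z / \<alpha>) * (Y z / \<beta>) ^ n) = X z * Y z ^ n * f z"
      using alp by (simp add: field_simps power_divide)
    also have "(\<alpha> * \<beta> ^ n * f z) * (((X z / \<alpha>) ^ Suc n + real n * (Y z / \<beta>) ^ Suc n) / real (Suc n))
       = \<alpha> * \<beta> ^ n * ((X z ^ Suc n * f z) / \<alpha> ^ Suc n + real n * (Y z ^ Suc n * f z) / \<beta> ^ Suc n) / real (Suc n)"
      using alp by (simp add: field_simps power_divide)
    finally show ?thesis using pa by simp
  qed
  have "(LINT z:\<Omega>|lborel. X z * Y z ^ n * f z) \<le>
      (LINT z:\<Omega>|lborel. \<alpha> * \<beta> ^ n * ((X z ^ Suc n * f z) / a + real n * (Y z ^ Suc n * f z) / b) / real (Suc n))"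
    using iXY iX iY pt by (intro set_integral_mono) (auto intro!: set_integral_add set_integrable_divide set_integrable_mult_right)
  also have "\<dots> = \<alpha> * \<beta> ^ n * (a / a + real n * b / b) / real (Suc n)"
    using iX iY by (simp add: set_integral_add set_integrable_divide a_def b_def)
  also have "\<dots> = \<alpha> * \<beta> ^ n" using ap by (simp add: field_simps)
  finally show ?thesis by (simp add: \<alpha>_def \<beta>_def a_def b_def)
qed



lemma pw_root: "(c powr (1 / (real n + 1))) ^ Suc n = c" if "c > 0" for c :: real
proof -
  have "(c powr (1 / (real n + 1))) ^ Suc n = (c powr (1 / (real n + 1))) powr real (Suc n)"
    using that by (intro powr_realpow[symmetric]) simp
  also have "\<dots> = c" using that by (simp add: powr_powr add.commute)
  finally show ?thesis .
qed

lemma pt_bound: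
  fixes R u f S :: real and n :: nat
  assumes n: "n \<ge> 1" and R: "R \<ge> 0" and u: "u \<le> 0" and f: "0 < f" "f \<le> S"
  shows "\<bar>R * (- u) ^ n * f\<bar> powr (1 + 1 / real n) \<le> R powr (1 + 1 / real n) * S powr (1 / real n) * (\<bar>u\<bar> ^ (n + 1) * f)"
proof -
  let ?p = "1 + 1 / real n"
  have "\<bar>R * (- u) ^ n * f\<bar> = R * \<bar>u\<bar> ^ n * f" using R f by (simp add: abs_mult power_abs)
  then have "\<bar>R * (- u) ^ n * f\<bar> powr ?p = R powr ?p * (\<bar>u\<bar> ^ n) powr ?p * f powr ?p"
    by (simp add: powr_mult)
  also have "(\<bar>u\<bar> ^ n) powr ?p = \<bar>u\<bar> ^ (n + 1)"
  proof (cases "u = 0")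
    case True then show ?thesis using n by simp
  next
    case False
    then have up: "\<bar>u\<bar> > 0" by simp
    have "(\<bar>u\<bar> ^ n) powr ?p = (\<bar>u\<bar> powr real n) powr ?p" using up by (simp add: powr_realpow)
    also have "\<dots> = \<bar>u\<bar> powr (real n * ?p)" by (simp add: powr_powr)
    also have "real n * ?p = real (n + 1)" using n by (simp add: field_simps)
    also have "\<bar>u\<bar> powr real (n + 1) = \<bar>u\<bar> ^ (n + 1)" by (rule powr_realpow[OF up])
    finally show ?thesis .
  qed
  also have "f powr ?p = f * f powr (1 / real n)" using f by (simp add: powr_add)
  also have "f powr (1 / real n) \<le> S powr (1 / real n)" using f by (intro powr_mono2) auto
  then have "R powr ?p * \<bar>u\<bar> ^ (n + 1) * (f * f powr (1 / real n)) \<le> R powr ?p * \<bar>u\<bar> ^ (n + 1) * (f * S powr (1 / real n))"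
    using f by (intro mult_left_mono) auto
  finally show ?thesis by (simp add: algebra_simps)
qed

lemma final_powr:
  fixes R S P :: real and n :: nat
  assumes n: "n \<ge> 1" and R: "R \<ge> 0" and S: "S \<ge> 0" and P: "P \<ge> 0"
  shows "(R powr (1 + 1 / real n) * S powr (1 / real n) * P) powr (1 / (1 + 1 / real n))
     = S powr (1 / (real n + 1)) * R * (P powr (1 / (real n + 1))) ^ n"
proof -
  have q: "1 / (1 + 1 / real n) = real n / (real n + 1)" using n by (simp add: field_simps)
  have "1 + 1 / real n > 0" by (simp add: add_pos_nonneg)
  then have pne: "(1 + 1 / real n) \<noteq> 0" by simp
  have "(R powr (1 + 1 / real n)) powr (1 / (1 + 1 / real n)) = R powr ((1 + 1 / real n) * (1 / (1 + 1 / real n)))"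
    by (rule powr_powr)
  also have "(1 + 1 / real n) * (1 / (1 + 1 / real n)) = 1" using pne by simp
  also have "R powr 1 = R" using R by (rule powr_one)
  finally have "(R powr (1 + 1 / real n)) powr (1 / (1 + 1 / real n)) = R" .
  moreover have "(S powr (1 / real n)) powr (1 / (1 + 1 / real n)) = S powr (1 / (real n + 1))"
    using n by (simp add: powr_powr q)
  moreover have "P powr (1 / (1 + 1 / real n)) = (P powr (1 / (real n + 1))) ^ n"
  proof (cases "P = 0")
    case True then show ?thesis using n by simp
  next
    case False
    then have Pp: "P > 0" using P by simp
    have "(P powr (1 / (real n + 1))) ^ n = (P powr (1 / (real n + 1))) powr real n"
      using Pp by (intro powr_realpow[symmetric]) simp
    also have "\<dots> = P powr (1 / (1 + 1 / real n))" by (simp add: powr_powr q)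
    finally show ?thesis by simp
  qed
  ultimately show ?thesis by (simp add: powr_mult)
qed



lemma intg_closure:
  fixes g :: "'a::euclidean_space \<Rightarrow> real"
  assumes "compact (closure \<Omega>)" "continuous_on (closure \<Omega>) g" "open \<Omega>"
  shows "set_integrable lborel \<Omega> g"
proof -
  have "set_integrable lborel (closure \<Omega>) g"
    unfolding set_integrable_def by (rule borel_integrable_compact[OF assms(1,2)])
  then show ?thesis
    by (rule set_integrable_subset) (use assms(3) closure_subset in auto)
qed

lemma set_int_nonneg:
  fixes g :: "'a \<Rightarrow> real"
  assumes "\<And>z. z \<in> A \<Longrightarrow> 0 \<le> g z"
  shows "0 \<le> (LINT z:A|M. g z)"
  unfolding set_lebesgue_integral_def
  by (rule integral_nonneg_AE) (use assms in \<open>auto simp: indicator_def\<close>)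

theorem mainTheorem5:
  fixes \<Omega> :: "(complex ^ 'n) set"
    and f :: "complex ^ 'n \<Rightarrow> real"
    and u :: "nat \<Rightarrow> complex ^ 'n \<Rightarrow> real"
  assumes dom: "strictly_pseudoconvex \<Omega>"
    and f_smooth: "smooth_on_closure \<Omega> f"
    and f_pos: "\<forall>z\<in>closure \<Omega>. 0 < f z"
    and u0_psh: "psh_on \<Omega> (u 0)"
    and u0_lip: "\<exists>C. C-lipschitz_on (closure \<Omega>) (u 0)"
    and u0_MA: "\<forall>A\<in>sets borel. A \<subseteq> \<Omega> \<longrightarrow>
                  (\<integral>\<^sup>+ z\<in>A. ennreal (f z) \<partial>lborel) \<le> emeasure (MA \<Omega> (u 0)) A"
    and u0_bdry: "\<forall>z\<in>frontier \<Omega>. u 0 z \<le> 0"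
    and u0_mass: "emeasure (MA \<Omega> (u 0)) \<Omega> < \<infinity>"
    and uk_psh: "\<forall>k. psh_on \<Omega> (u (Suc k)) \<and> continuous_on (closure \<Omega>) (u (Suc k))"
    and uk_MA: "\<forall>k. is_MA \<Omega> (u (Suc k))
                  (density lborel (\<lambda>z. ennreal (indicator \<Omega> z *
                     (Rq \<Omega> f (u k) * (- u k z) ^ CARD('n) * f z))))"
    and uk_bdry: "\<forall>k. \<forall>z\<in>frontier \<Omega>. u (Suc k) z = 0"
  shows "\<forall>k. (LINT z:\<Omega>|lborel. \<bar>Rq \<Omega> f (u k) * (- u k z) ^ CARD('n) * f z\<bar>
                               powr (1 + 1 / real CARD('n)))
               powr (1 / (1 + 1 / real CARD('n)))
           \<le> (Sup (f ` \<Omega>)) powr (1 / (real CARD('n) + 1)) * Rq \<Omega> f (u 0) *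
              ((LINT z:\<Omega>|lborel. \<bar>u 0 z\<bar> ^ (CARD('n) + 1) * f z)
                 powr (1 / (real CARD('n) + 1))) ^ CARD('n)"
proof -
  define n where "n = CARD('n)"
  have n1: "n \<ge> 1" unfolding n_def using zero_less_card_finite by (simp add: Suc_le_eq)
  note domu = dom[unfolded strictly_pseudoconvex_def]
  have bO: "bounded \<Omega>" using domu by (rule conjunct1)
  have oO: "open \<Omega>" using domu[THEN conjunct2] by (rule conjunct1)
  have neO: "\<Omega> \<noteq> {}" using domu[THEN conjunct2, THEN conjunct2] by (rule conjunct1)
  have Ob: "\<Omega> \<in> sets lborel" using oO by simp
  have kc: "compact (closure \<Omega>)" using bO by (simp add: compact_closure)
  obtain U h where Uh: "open U" "closure \<Omega> \<subseteq> U" "smooth_on U h" "\<forall>z\<in>closure \<Omega>. h z = f z"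
    using f_smooth unfolding smooth_on_closure_def by blast
  have "Ck_on 0 U h" using Uh(3) unfolding smooth_on_def by blast
  then have "continuous_on U (iter_deriv [] h)" unfolding Ck_on_def
    by (elim conjE allE[of _ "[]"]) simp
  then have "continuous_on (closure \<Omega>) h" using Uh(2) continuous_on_subset by auto
  then have cf: "continuous_on (closure \<Omega>) f" using Uh(4) continuous_on_eq by blast
  have fpos: "\<And>z. z \<in> \<Omega> \<Longrightarrow> 0 < f z" using f_pos closure_subset by blast
  define S where "S = Sup (f ` \<Omega>)"
  have "bounded (f ` closure \<Omega>)" using compact_continuous_image[OF cf kc] compact_imp_bounded by blast
  then have "bdd_above (f ` \<Omega>)" using closure_subset
    by (meson bounded_imp_bdd_above bdd_above_mono image_mono)
  then have fS: "\<And>z. z \<in> \<Omega> \<Longrightarrow> f z \<le> S" unfolding S_def by (simp add: cSup_upper)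
  obtain z1 where z1: "z1 \<in> \<Omega>" using neO by blast
  have S0: "S \<ge> 0" using fS[OF z1] fpos[OF z1] by linarith
  have cu: "continuous_on (closure \<Omega>) (u k)" for k
  proof (cases k)
    case 0 then show ?thesis using u0_lip lipschitz_on_continuous_on by blast
  next
    case (Suc k') then show ?thesis using uk_psh by blast
  qed
  have psh: "psh_on \<Omega> (u k)" for k using u0_psh uk_psh by (cases k) auto
  have bd: "\<forall>z\<in>frontier \<Omega>. u k z \<le> 0" for k using u0_bdry uk_bdry by (cases k) auto
  have neg: "u k z \<le> 0" if "z \<in> \<Omega>" for k z
    using max_principle[OF psh cu bO bd] that by blast
  have cuO: "continuous_on \<Omega> (u k)" for k using cu closure_subset continuous_on_subset by blast
  have cfO: "continuous_on \<Omega> f" using cf closure_subset continuous_on_subset by blast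
  define P where "P k = (LINT z:\<Omega>|lborel. \<bar>u k z\<bar> ^ (n + 1) * f z)" for k
  define Num where "Num k = (LINT z:\<Omega>|MA \<Omega> (u k). - u k z)" for k
  define R where "R k = Rq \<Omega> f (u k)" for k
  have den: "(LINT z:\<Omega>|lborel. (- u k z) ^ (n + 1) * f z) = P k" for k
    unfolding P_def by (rule set_lebesgue_integral_cong[OF Ob]) (auto dest: neg[of _ k])
  have Rdef: "R k = Num k / P k" for k unfolding R_def Rq_def Num_def using den[of k] by (simp add: n_def)
  have P0: "P k \<ge> 0" for k unfolding P_def
    by (rule set_int_nonneg) (use fpos in \<open>force intro!: mult_nonneg_nonneg\<close>)
  have N0: "Num k \<ge> 0" for k unfolding Num_def by (rule set_int_nonneg) (use neg in auto)
  have R0: "R k \<ge> 0" for k using P0 N0 Rdef by simp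
  define \<alpha> where "\<alpha> k = P k powr (1 / (real n + 1))" for k
  define a where "a k = R k * \<alpha> k ^ n" for k
  have a0: "a k \<ge> 0" for k unfolding a_def \<alpha>_def using R0 by simp
  have step: "a (Suc k) \<le> a k" for k
  proof (cases "P (Suc k) = 0")
    case True
    then have "R (Suc k) = 0" by (simp add: Rdef)
    then show ?thesis using a0[of k] by (simp add: a_def)
  next
    case False
    then have P1: "P (Suc k) > 0" using P0[of "Suc k"] by simp
    have MAeq: "MA \<Omega> (u (Suc k)) = density lborel (\<lambda>z. ennreal (indicator \<Omega> z * (R k * (- u k z) ^ n * f z)))"
      using MA_eq[OF psh cu bO] uk_MA by (simp add: R_def n_def)
    define Q where "Q = (LINT z:\<Omega>|lborel. \<bar>u (Suc k) z\<bar> * \<bar>u k z\<bar> ^ n * f z)"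
    have NumQ: "Num (Suc k) = R k * Q"
    proof -
      let ?g = "\<lambda>z. indicator \<Omega> z * (R k * (- u k z) ^ n * f z)"
      have gm: "?g \<in> borel_measurable lborel"
        using borel_measurable_continuous_on_indicator[of \<Omega> "\<lambda>z. R k * (- u k z) ^ n * f z"] oO
        by (simp add: continuous_intros cuO cfO)
      have hm: "(\<lambda>z. indicator \<Omega> z *\<^sub>R (- u (Suc k) z)) \<in> borel_measurable lborel"
        using borel_measurable_continuous_on_indicator[of \<Omega> "\<lambda>z. - u (Suc k) z"] oO
        by (simp add: continuous_intros cuO)
      have gnn: "AE z in lborel. 0 \<le> ?g z"
      proof (rule AE_I2)
        fix z show "0 \<le> ?g z"
        proof (cases "z \<in> \<Omega>")
          case True
          then have "0 \<le> - u k z" using neg by force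
          then show ?thesis using True R0[of k] fpos[OF True] by (simp add: indicator_def)
        qed (simp add: indicator_def)
      qed
      have "Num (Suc k) = integral\<^sup>L (density lborel ?g) (\<lambda>z. indicator \<Omega> z *\<^sub>R (- u (Suc k) z))"
        unfolding Num_def MAeq set_lebesgue_integral_def ..
      also have "\<dots> = integral\<^sup>L lborel (\<lambda>z. ?g z *\<^sub>R (indicator \<Omega> z *\<^sub>R (- u (Suc k) z)))"
        by (rule integral_density[OF hm gm gnn])
      also have "\<dots> = integral\<^sup>L lborel (\<lambda>z. indicator \<Omega> z *\<^sub>R (R k * (\<bar>u (Suc k) z\<bar> * \<bar>u k z\<bar> ^ n * f z)))"
      proof (rule Bochner_Integration.integral_cong[OF refl])
        fix z show "?g z *\<^sub>R (indicator \<Omega> z *\<^sub>R (- u (Suc k) z)) =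
            indicator \<Omega> z *\<^sub>R (R k * (\<bar>u (Suc k) z\<bar> * \<bar>u k z\<bar> ^ n * f z))"
        proof (cases "z \<in> \<Omega>")
          case True
          then have "\<bar>u k z\<bar> = - u k z" "\<bar>u (Suc k) z\<bar> = - u (Suc k) z" using neg by force+
          then show ?thesis using True by (simp add: indicator_def)
        qed (simp add: indicator_def)
      qed
      also have "\<dots> = (LINT z:\<Omega>|lborel. R k * (\<bar>u (Suc k) z\<bar> * \<bar>u k z\<bar> ^ n * f z))"
        unfolding set_lebesgue_integral_def ..
      also have "\<dots> = R k * Q" unfolding Q_def by (rule set_integral_mult_right)
      finally show ?thesis .
    qed
    show ?thesis
    proof (cases "P k = 0")
      case True
      then have "R k = 0" by (simp add: Rdef)
      then have "Num (Suc k) = 0" using NumQ by simp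
      then have "R (Suc k) = 0" by (simp add: Rdef)
      then show ?thesis using a0[of k] by (simp add: a_def)
    next
      case False
      then have P2: "P k > 0" using P0[of k] by simp
      have iX: "set_integrable lborel \<Omega> (\<lambda>z. \<bar>u (Suc k) z\<bar> ^ Suc n * f z)"
        by (rule intg_closure[OF kc _ oO]) (intro continuous_intros cu cf)
      have iY: "set_integrable lborel \<Omega> (\<lambda>z. \<bar>u k z\<bar> ^ Suc n * f z)"
        by (rule intg_closure[OF kc _ oO]) (intro continuous_intros cu cf)
      have iXY: "set_integrable lborel \<Omega> (\<lambda>z. \<bar>u (Suc k) z\<bar> * \<bar>u k z\<bar> ^ n * f z)"
        by (rule intg_closure[OF kc _ oO]) (intro continuous_intros cu cf)
      have A: "(LINT z:\<Omega>|lborel. \<bar>u (Suc k) z\<bar> ^ Suc n * f z) > 0" using P1 by (simp add: P_def)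
      have B: "(LINT z:\<Omega>|lborel. \<bar>u k z\<bar> ^ Suc n * f z) > 0" using P2 by (simp add: P_def)
      have "Q \<le> (LINT z:\<Omega>|lborel. \<bar>u (Suc k) z\<bar> ^ Suc n * f z) powr (1 / real (Suc n)) *
          ((LINT z:\<Omega>|lborel. \<bar>u k z\<bar> ^ Suc n * f z) powr (1 / real (Suc n))) ^ n"
        unfolding Q_def by (rule holder_np[OF iX iY iXY _ _ _ A B]) (use fpos in \<open>auto simp: less_imp_le\<close>)
      then have Qle: "Q \<le> \<alpha> (Suc k) * \<alpha> k ^ n" by (simp add: \<alpha>_def P_def add.commute)
      have al1: "\<alpha> (Suc k) > 0" using P1 by (simp add: \<alpha>_def)
      have pw: "\<alpha> (Suc k) ^ Suc n = P (Suc k)" unfolding \<alpha>_def by (rule pw_root[OF P1])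
      have "a (Suc k) = R k * Q * \<alpha> (Suc k) ^ n / \<alpha> (Suc k) ^ Suc n"
        using pw by (simp add: a_def Rdef[of "Suc k"] NumQ)
      also have "\<dots> = R k * Q / \<alpha> (Suc k)" using al1 by (simp add: field_simps)
      also have "\<dots> \<le> R k * (\<alpha> (Suc k) * \<alpha> k ^ n) / \<alpha> (Suc k)"
        using Qle R0[of k] al1 by (intro divide_right_mono mult_left_mono) auto
      also have "\<dots> = a k" using al1 by (simp add: a_def)
      finally show ?thesis .
    qed
  qed
  have adec: "a k \<le> a 0" for k
  proof (induction k)
    case 0 then show ?case by simp
  next
    case (Suc k) then show ?case using step[of k] by linarith
  qed
  show ?thesis
  proof
    fix k
    let ?p = "1 + 1 / real n"
    let ?G = "\<lambda>z. \<bar>R k * (- u k z) ^ n * f z\<bar> powr ?p"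
    let ?H = "\<lambda>z. R k powr ?p * S powr (1 / real n) * (\<bar>u k z\<bar> ^ (n + 1) * f z)"
    have iP: "set_integrable lborel \<Omega> (\<lambda>z. \<bar>u k z\<bar> ^ (n + 1) * f z)"
      by (rule intg_closure[OF kc _ oO]) (intro continuous_intros cu cf)
    have iH: "set_integrable lborel \<Omega> ?H" using iP by simp
    have "(LINT z:\<Omega>|lborel. ?G z) \<le> (LINT z:\<Omega>|lborel. ?H z)"
      unfolding set_lebesgue_integral_def
    proof (rule integral_mono')
      show "integrable lborel (\<lambda>z. indicator \<Omega> z *\<^sub>R ?H z)" using iH unfolding set_integrable_def .
      fix z
      show "indicator \<Omega> z *\<^sub>R ?G z \<le> indicator \<Omega> z *\<^sub>R ?H z"
        using pt_bound[OF n1 R0[of k] neg[of z k] fpos fS, of z] by (auto simp: indicator_def)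
      show "0 \<le> indicator \<Omega> z *\<^sub>R ?H z" using fpos[of z] by (auto simp: indicator_def)
    qed
    also have "(LINT z:\<Omega>|lborel. ?H z) = R k powr ?p * S powr (1 / real n) * P k"
      by (simp add: P_def)
    finally have I: "(LINT z:\<Omega>|lborel. ?G z) \<le> R k powr ?p * S powr (1 / real n) * P k" .
    have G0: "0 \<le> (LINT z:\<Omega>|lborel. ?G z)" by (rule set_int_nonneg) simp
    have "(LINT z:\<Omega>|lborel. ?G z) powr (1 / ?p) \<le> (R k powr ?p * S powr (1 / real n) * P k) powr (1 / ?p)"
      using I G0 by (intro powr_mono2) auto
    also have "\<dots> = S powr (1 / (real n + 1)) * a k"
      using final_powr[OF n1 R0[of k] S0 P0[of k]] by (simp add: a_def \<alpha>_def)
    also have "\<dots> \<le> S powr (1 / (real n + 1)) * a 0"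
      using adec[of k] by (intro mult_left_mono) auto
    finally show "(LINT z:\<Omega>|lborel. \<bar>Rq \<Omega> f (u k) * (- u k z) ^ CARD('n) * f z\<bar>
                               powr (1 + 1 / real CARD('n)))
               powr (1 / (1 + 1 / real CARD('n)))
           \<le> (Sup (f ` \<Omega>)) powr (1 / (real CARD('n) + 1)) * Rq \<Omega> f (u 0) *
              ((LINT z:\<Omega>|lborel. \<bar>u 0 z\<bar> ^ (CARD('n) + 1) * f z)
                 powr (1 / (real CARD('n) + 1))) ^ CARD('n)"
      by (simp add: a_def \<alpha>_def R_def P_def S_def n_def mult.assoc)
  qed
qed


end
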